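(* For $k\ge 3$ let $g_k(x)=\sum_{n\ge0}|S_n(123,\,(k-1)(k-2)\cdots 21(k+1)k)|\,x^n$ (the $n=0$ term being $1$). Then $g_3(x)=\frac{1-2x}{1-3x+x^2}$ (so $|S_n(123,2143)|$ is $1,1,2,5,13,34,\dots$), and for every $k\ge 4$, $$g_k(x)=\frac{1}{1-x\,g_{k-1}(x)}.$$ *)

theory Defs
  imports "HOL-Computational_Algebra.Formal_Power_Series"
begin

definition perms_of :: "nat \<Rightarrow> nat list set" where
  "perms_of n = {s. distinct s \<and> set s = {1..n}}"

definition contains_pattern :: "nat list \<Rightarrow> nat list \<Rightarrow> bool" where
  "contains_pattern s p \<longleftrightarrow>
     (\<exists>idx. length idx = length p \<and> sorted_wrt (<) idx \<and> (\<forall>i\<in>set idx. i < length s) \<and>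
        (\<forall>a b. a < length p \<longrightarrow> b < length p \<longrightarrow>
           (s ! (idx ! a) < s ! (idx ! b) \<longleftrightarrow> p ! a < p ! b)))"

definition avoids :: "nat list \<Rightarrow> nat list \<Rightarrow> bool" where
  "avoids s p \<longleftrightarrow> \<not> contains_pattern s p"

definition tau :: "nat \<Rightarrow> nat list" where
  "tau k = rev [1..<k] @ [k + 1, k]"

definition Sn :: "nat \<Rightarrow> nat \<Rightarrow> nat list set" where
  "Sn k n = {s \<in> perms_of n. avoids s [1,2,3] \<and> avoids s (tau k)}"

definition gk :: "nat \<Rightarrow> rat fps" where
  "gk k = Abs_fps (\<lambda>n. of_nat (card (Sn k n)))"

end

theory Submission
  imports Defs
begin

definition av123 :: "nat list \<Rightarrow> bool" where
  "av123 s \<longleftrightarrow> (\<forall>i j l. i < j \<longrightarrow> j < l \<longrightarrow> l < length s \<longrightarrow> \<not> (s!i < s!j \<and> s!j < s!l))"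

definition cnt :: "nat list \<Rightarrow> nat \<Rightarrow> nat \<Rightarrow> nat" where
  "cnt s a b = card {p. p < a \<and> s!p < s!b}"

definition okh :: "nat \<Rightarrow> nat list \<Rightarrow> bool" where
  "okh h s \<longleftrightarrow> (\<forall>a b. a < b \<longrightarrow> b < length s \<longrightarrow> s!b < s!a \<longrightarrow> cnt s a b \<le> h)"

lemma less3_cases: "(a::nat) < 3 \<Longrightarrow> a = 0 \<or> a = 1 \<or> a = 2" by auto

lemma avoids123_iff: "avoids s [1,2,3] \<longleftrightarrow> av123 s"
proof
  assume "avoids s [1,2,3]"
  show "av123 s" unfolding av123_def
  proof (intro allI impI notI)
    fix i j l assume h: "i < j" "j < l" "l < length s" "s!i < s!j \<and> s!j < s!l"
    have "contains_pattern s [1,2,3]" unfolding contains_pattern_def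
    proof (rule exI[of _ "[i,j,l]"], intro conjI allI impI)
      show "length [i,j,l] = length [1,2,3::nat]" by simp
      show "sorted_wrt (<) [i,j,l]" using h by auto
      show "\<forall>x\<in>set [i,j,l]. x < length s" using h by auto
      fix a b :: nat assume "a < length [1,2,3::nat]" "b < length [1,2,3::nat]"
      then have "a < 3" "b < 3" by auto
      then show "(s ! ([i,j,l] ! a) < s ! ([i,j,l] ! b)) = ([1,2,3::nat] ! a < [1,2,3] ! b)"
        using h by (auto dest!: less3_cases)
    qed
    then show False using \<open>avoids s [1,2,3]\<close> unfolding avoids_def by simp
  qed
next
  assume "av123 s"
  show "avoids s [1,2,3]" unfolding avoids_def contains_pattern_def
  proof
    assume "\<exists>idx. length idx = length [1,2,3::nat] \<and> sorted_wrt (<) idx \<and> (\<forall>i\<in>set idx. i < length s) \<and>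
        (\<forall>a b. a < length [1,2,3::nat] \<longrightarrow> b < length [1,2,3::nat] \<longrightarrow>
           (s ! (idx ! a) < s ! (idx ! b)) = ([1,2,3::nat] ! a < [1,2,3::nat] ! b))"
    then obtain idx where l0: "length idx = length [1,2,3::nat]" and so: "sorted_wrt (<) idx" and
      bd: "\<forall>i\<in>set idx. i < length s" and
      o0: "\<forall>a b. a < length [1,2,3::nat] \<longrightarrow> b < length [1,2,3::nat] \<longrightarrow> (s ! (idx ! a) < s ! (idx ! b)) = ([1,2,3::nat] ! a < [1,2,3::nat] ! b)"
      by blast
    have l: "length idx = 3" using l0 by simp
    have o: "\<And>a b. a < 3 \<Longrightarrow> b < 3 \<Longrightarrow> (s ! (idx ! a) < s ! (idx ! b)) = ([1,2,3::nat] ! a < [1,2,3::nat] ! b)"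
      using o0 by simp
    obtain i j l where idx: "idx = [i,j,l]" using l
      by (metis (no_types) length_0_conv length_Suc_conv numeral_3_eq_3)
    have "i < j" "j < l" "l < length s" using so bd idx by auto
    moreover have "s!i < s!j" using o[of 0 1] idx by simp
    moreover have "s!j < s!l" using o[of 1 2] idx by simp
    ultimately show False using \<open>av123 s\<close> unfolding av123_def by blast
  qed
qed

lemma tau_len: "k \<ge> 1 \<Longrightarrow> length (tau k) = k + 1"
  by (simp add: tau_def)

lemma tau_nth1: "i < k - 1 \<Longrightarrow> tau k ! i = k - 1 - i"
  by (simp add: tau_def nth_append rev_nth)

lemma tau_nth2: "k \<ge> 1 \<Longrightarrow> tau k ! (k - 1) = k + 1"
  by (simp add: tau_def nth_append)

lemma tau_nth3: assumes "k \<ge> 1" shows "tau k ! k = k"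
proof -
  have "k - (k - 1) = 1" using assms by simp
  then show ?thesis using assms by (simp add: tau_def nth_append) arith
qed

lemma av123_dec:
  assumes "distinct s" "av123 s" "p < p'" "p' < a" "a < length s" "s!p' < s!a"
  shows "s!p' < s!p"
proof -
  have "\<not> (s!p < s!p' \<and> s!p' < s!a)" using assms unfolding av123_def by blast
  then have "\<not> s!p < s!p'" using assms by blast
  moreover have "s!p \<noteq> s!p'" using assms nth_eq_iff_index_eq by fastforce
  ultimately show ?thesis by simp
qed

lemma cnt_finite: "finite {p. p < a \<and> s!p < s!b}"
  by (rule finite_subset[of _ "{..<a}"]) auto

lemma contains_tau_iff:
  assumes ds: "distinct s" and av: "av123 s" and k2: "k \<ge> 2"
  shows "contains_pattern s (tau k) \<longleftrightarrow> (\<exists>a b. a < b \<and> b < length s \<and> s!b < s!a \<and> k - 1 \<le> cnt s a b)"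
proof
  assume "contains_pattern s (tau k)"
  then obtain idx where l: "length idx = length (tau k)" and so: "sorted_wrt (<) idx" and
      bd: "\<forall>i\<in>set idx. i < length s" and
      o: "\<forall>a b. a < length (tau k) \<longrightarrow> b < length (tau k) \<longrightarrow> (s ! (idx ! a) < s ! (idx ! b)) = (tau k ! a < tau k ! b)"
    unfolding contains_pattern_def by blast
  have lk: "length idx = k + 1" using l tau_len k2 by simp
  define a where "a = idx ! (k-1)"
  define b where "b = idx ! k"
  have ab: "a < b" unfolding a_def b_def using so lk k2 by (simp add: sorted_wrt_nth_less)
  have bl: "b < length s" unfolding b_def using bd lk by simp
  have "(s ! (idx ! k) < s ! (idx ! (k-1))) = (tau k ! k < tau k ! (k-1))"
    using o lk l k2 by simp
  then have sba: "s!b < s!a" unfolding a_def b_def using tau_nth2[of k] tau_nth3[of k] k2 by simp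
  have sub: "(\<lambda>i. idx ! i) ` {..<k-1} \<subseteq> {p. p < a \<and> s!p < s!b}"
  proof
    fix x assume "x \<in> (\<lambda>i. idx ! i) ` {..<k-1}"
    then obtain i where i: "i < k - 1" "x = idx ! i" by auto
    have "x < a" unfolding a_def i(2) using so lk i k2 by (simp add: sorted_wrt_nth_less)
    moreover have "(s ! (idx ! i) < s ! (idx ! k)) = (tau k ! i < tau k ! k)"
      using o lk l k2 i by simp
    then have "s!x < s!b" unfolding b_def i(2) using tau_nth1[OF i(1)] tau_nth3[of k] k2 i by simp
    ultimately show "x \<in> {p. p < a \<and> s!p < s!b}" by simp
  qed
  have inj: "inj_on (\<lambda>i. idx ! i) {..<k-1}"
  proof -
    have "distinct idx" using so by (simp add: strict_sorted_iff)
    then show ?thesis unfolding inj_on_def using lk by (simp add: nth_eq_iff_index_eq)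
  qed
  have "k - 1 = card ((\<lambda>i. idx ! i) ` {..<k-1})" using card_image[OF inj] by simp
  also have "\<dots> \<le> cnt s a b" unfolding cnt_def by (rule card_mono[OF cnt_finite sub])
  finally show "\<exists>a b. a < b \<and> b < length s \<and> s!b < s!a \<and> k - 1 \<le> cnt s a b"
    using ab bl sba by blast
next
  assume "\<exists>a b. a < b \<and> b < length s \<and> s!b < s!a \<and> k - 1 \<le> cnt s a b"
  then obtain a b where ab: "a < b" and bl: "b < length s" and sba: "s!b < s!a" and c: "k - 1 \<le> cnt s a b"
    by blast
  define P where "P = {p. p < a \<and> s!p < s!b}"
  have fP: "finite P" unfolding P_def by (rule cnt_finite)
  obtain Q where QP: "Q \<subseteq> P" and cQ: "card Q = k - 1"
    using obtain_subset_with_card_n[of "k-1" P] c unfolding cnt_def P_def by blast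
  have fQ: "finite Q" using fP QP finite_subset by blast
  define qs where "qs = sorted_list_of_set Q"
  have lqs: "length qs = k - 1" unfolding qs_def using cQ by simp
  have sqs: "sorted_wrt (<) qs" unfolding qs_def by simp
  have setqs: "set qs = Q" unfolding qs_def using fQ by simp
  have qsP: "\<And>i. i < k - 1 \<Longrightarrow> qs ! i < a \<and> s!(qs!i) < s!b"
    using setqs QP lqs unfolding P_def by (metis (mono_tags, lifting) mem_Collect_eq nth_mem subsetD)
  have dec: "\<And>i j. i < j \<Longrightarrow> j < k - 1 \<Longrightarrow> s!(qs!j) < s!(qs!i)"
  proof -
    fix i j assume ij: "i < j" "j < k - 1"
    have "qs!i < qs!j" using sqs ij lqs by (simp add: sorted_wrt_nth_less)
    moreover have "qs!j < a" "s!(qs!j) < s!b" using qsP ij by auto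
    ultimately show "s!(qs!j) < s!(qs!i)"
      using av123_dec[OF ds av, of "qs!i" "qs!j" a] ab bl sba by simp
  qed
  define idx where "idx = qs @ [a, b]"
  have lidx: "length idx = k + 1" unfolding idx_def using lqs k2 by simp
  have idx1: "\<And>i. i < k - 1 \<Longrightarrow> idx ! i = qs ! i" unfolding idx_def using lqs by (simp add: nth_append)
  have idx2: "idx ! (k-1) = a" unfolding idx_def using lqs by (simp add: nth_append)
  have idx3: "idx ! k = b"
  proof -
    have "k - (k - 1) = 1" using k2 by simp
    then show ?thesis unfolding idx_def using lqs k2 by (simp add: nth_append) arith
  qed
  have cases: "\<And>i. i < k + 1 \<Longrightarrow> i < k - 1 \<or> i = k - 1 \<or> i = k" using k2 by auto
  show "contains_pattern s (tau k)" unfolding contains_pattern_def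
  proof (rule exI[of _ idx], intro conjI allI impI)
    show "length idx = length (tau k)" using lidx tau_len k2 by simp
    have qb: "\<And>i. i < k - 1 \<Longrightarrow> qs ! i < b" using qsP ab by (meson order.strict_trans)
    show "sorted_wrt (<) idx" unfolding idx_def using sqs qsP qb setqs lqs ab
      by (auto simp: sorted_wrt_append in_set_conv_nth)
    show "\<forall>i\<in>set idx. i < length s" unfolding idx_def using setqs qsP lqs ab bl
      by (auto simp: in_set_conv_nth) (meson order.strict_trans)
    fix x y assume "x < length (tau k)" "y < length (tau k)"
    then have x: "x < k + 1" and y: "y < k + 1" using tau_len k2 by auto
    show "(s ! (idx ! x) < s ! (idx ! y)) = (tau k ! x < tau k ! y)"
    proof -
      have A: "\<And>i. i < k - 1 \<Longrightarrow> s!(qs!i) < s!a" using qsP sba by (meson order.strict_trans)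
      have B: "\<And>i. i < k - 1 \<Longrightarrow> s!(qs!i) < s!b" using qsP by blast
      have tn2: "tau k ! (k-1) = k + 1" and tn3: "tau k ! k = k" using tau_nth2 tau_nth3 k2 by auto
      from cases[OF x] cases[OF y] show ?thesis
      proof (elim disjE)
        assume xy: "x < k - 1" "y < k - 1"
        have e: "(tau k ! x < tau k ! y) = (y < x)" using xy tau_nth1 by auto
        have ix: "idx!x = qs!x" "idx!y = qs!y" using idx1 xy by auto
        show ?thesis
        proof (cases "y < x")
          case True then show ?thesis using dec[OF True xy(1)] e ix by simp
        next
          case False
          then have "x = y \<or> x < y" by auto
          then show ?thesis using dec[OF _ xy(2), of x] False e ix by auto
        qed
      next
        assume xy: "x < k - 1" "y = k - 1"
        show ?thesis unfolding xy(2) idx2 idx1[OF xy(1)] tau_nth1[OF xy(1)] tn2 using A[OF xy(1)] k2 by simp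
      next
        assume xy: "x < k - 1" "y = k"
        show ?thesis unfolding xy(2) idx3 idx1[OF xy(1)] tau_nth1[OF xy(1)] tn3 using B[OF xy(1)] k2 by simp
      next
        assume xy: "x = k - 1" "y < k - 1"
        show ?thesis unfolding xy(1) idx2 idx1[OF xy(2)] tau_nth1[OF xy(2)] tn2 using A[OF xy(2)] k2 by simp
      next
        assume xy: "x = k - 1" "y = k - 1"
        show ?thesis unfolding xy by simp
      next
        assume xy: "x = k - 1" "y = k"
        show ?thesis unfolding xy idx2 idx3 tn2 tn3 using sba by simp
      next
        assume xy: "x = k" "y < k - 1"
        show ?thesis unfolding xy(1) idx3 idx1[OF xy(2)] tau_nth1[OF xy(2)] tn3 using B[OF xy(2)] k2 by simp
      next
        assume xy: "x = k" "y = k - 1"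
        show ?thesis unfolding xy idx2 idx3 tn2 tn3 using sba by simp
      next
        assume xy: "x = k" "y = k"
        show ?thesis unfolding xy by simp
      qed
    qed
  qed
qed

lemma avoids_tau_iff:
  assumes "distinct s" "av123 s" "k \<ge> 2"
  shows "avoids s (tau k) \<longleftrightarrow> okh (k - 2) s"
proof -
  have "\<And>c::nat. (\<not> k - 1 \<le> c) = (c \<le> k - 2)" using assms(3) by auto
  then show ?thesis unfolding avoids_def okh_def using contains_tau_iff[OF assms] by blast
qed


definition AA :: "nat \<Rightarrow> nat \<Rightarrow> nat list set" where
  "AA h n = {s \<in> perms_of n. av123 s \<and> okh h s}"

definition si :: "nat list \<Rightarrow> bool" where
  "si s \<longleftrightarrow> (\<forall>j. 0 < j \<longrightarrow> j < length s \<longrightarrow> (\<exists>p<j. s!p \<le> length s - j))"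

definition SI :: "nat \<Rightarrow> nat \<Rightarrow> nat list set" where
  "SI h m = {s \<in> AA h m. si s}"

definition ssum :: "nat list \<Rightarrow> nat list \<Rightarrow> nat list" where
  "ssum a b = map (\<lambda>x. x + length b) a @ b"

lemma perms_len: "s \<in> perms_of n \<Longrightarrow> length s = n"
  unfolding perms_of_def by (metis (mono_tags, lifting) card_atLeastAtMost diff_Suc_1 distinct_card mem_Collect_eq)

lemma perms_nth: "s \<in> perms_of n \<Longrightarrow> i < n \<Longrightarrow> 1 \<le> s!i \<and> s!i \<le> n"
proof -
  assume s: "s \<in> perms_of n" and i: "i < n"
  then have "s!i \<in> set s" using perms_len by simp
  then show ?thesis using s unfolding perms_of_def by auto
qed

lemma perms_distinct: "s \<in> perms_of n \<Longrightarrow> distinct s"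
  unfolding perms_of_def by simp

lemma perms_finite: "finite (perms_of n)"
proof -
  have "perms_of n \<subseteq> {xs. set xs \<subseteq> {1..n} \<and> length xs = n}"
    using perms_len unfolding perms_of_def by auto
  then show ?thesis using finite_lists_length_eq[of "{1..n}" n] finite_subset by blast
qed

lemma AA_finite: "finite (AA h n)"
  unfolding AA_def using perms_finite by simp

lemma SI_finite: "finite (SI h n)"
  unfolding SI_def using AA_finite by simp

lemma perms_of_I:
  assumes "distinct s" "length s = n" "\<forall>x\<in>set s. 1 \<le> x \<and> x \<le> n"
  shows "s \<in> perms_of n"
proof -
  have "set s \<subseteq> {1..n}" using assms by auto
  moreover have "card (set s) = card {1..n}" using distinct_card[OF assms(1)] assms(2) by simp
  ultimately have "set s = {1..n}" by (simp add: card_subset_eq)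
  then show ?thesis using assms unfolding perms_of_def by simp
qed

lemma ssum_len: "length (ssum a b) = length a + length b"
  unfolding ssum_def by simp

lemma ssum_nth1: "i < length a \<Longrightarrow> ssum a b ! i = a!i + length b"
  unfolding ssum_def by (simp add: nth_append)

lemma ssum_nth2: "length a \<le> i \<Longrightarrow> ssum a b ! i = b!(i - length a)"
  unfolding ssum_def by (simp add: nth_append)

lemma ssum_perm:
  assumes a: "a \<in> perms_of m" and b: "b \<in> perms_of n"
  shows "ssum a b \<in> perms_of (m + n)"
proof (rule perms_of_I)
  have la: "length a = m" and lb: "length b = n" using a b perms_len by auto
  show "length (ssum a b) = m + n" using la lb ssum_len by simp
  have "distinct (map (\<lambda>x. x + length b) a)" using perms_distinct[OF a] by (simp add: distinct_map inj_on_def)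
  moreover have "set (map (\<lambda>x. x + length b) a) \<inter> set b = {}" using a b lb unfolding perms_of_def by auto
  ultimately show "distinct (ssum a b)" unfolding ssum_def using perms_distinct[OF b] by simp
  show "\<forall>x\<in>set (ssum a b). 1 \<le> x \<and> x \<le> m + n" using a b lb unfolding perms_of_def ssum_def by auto
qed

lemma ssum_vals:
  assumes a: "a \<in> perms_of m" and b: "b \<in> perms_of n"
  shows "\<And>i. i < m \<Longrightarrow> ssum a b ! i = a!i + n \<and> n < ssum a b ! i"
    and "\<And>i. m \<le> i \<Longrightarrow> i < m + n \<Longrightarrow> ssum a b ! i = b!(i - m) \<and> ssum a b ! i \<le> n"
proof -
  have la: "length a = m" and lb: "length b = n" using a b perms_len by auto
  fix i
  show "i < m \<Longrightarrow> ssum a b ! i = a!i + n \<and> n < ssum a b ! i"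
    using ssum_nth1[of i a b] la lb perms_nth[OF a, of i] by simp
  show "m \<le> i \<Longrightarrow> i < m + n \<Longrightarrow> ssum a b ! i = b!(i - m) \<and> ssum a b ! i \<le> n"
    using ssum_nth2[of a i b] la lb perms_nth[OF b, of "i - m"] by simp
qed

lemma av123_ssum:
  assumes a: "a \<in> perms_of m" and b: "b \<in> perms_of n"
  shows "av123 (ssum a b) \<longleftrightarrow> av123 a \<and> av123 b"
proof -
  have la: "length a = m" and lb: "length b = n" using a b perms_len by auto
  have ls: "length (ssum a b) = m + n" using ssum_len la lb by simp
  note v1 = ssum_vals(1)[OF a b] and v2 = ssum_vals(2)[OF a b]
  show ?thesis
  proof (intro iffI conjI)
    assume av: "av123 (ssum a b)"
    show "av123 a" unfolding av123_def
    proof (intro allI impI notI)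
      fix i j l assume h: "i < j" "j < l" "l < length a" "a!i < a!j \<and> a!j < a!l"
      have "ssum a b ! i < ssum a b ! j \<and> ssum a b ! j < ssum a b ! l"
        using h v1[of i] v1[of j] v1[of l] la by simp
      moreover have "l < length (ssum a b)" using h la ls by simp
      ultimately show False using av h unfolding av123_def by blast
    qed
    show "av123 b" unfolding av123_def
    proof (intro allI impI notI)
      fix i j l assume h: "i < j" "j < l" "l < length b" "b!i < b!j \<and> b!j < b!l"
      have "ssum a b ! (i+m) < ssum a b ! (j+m) \<and> ssum a b ! (j+m) < ssum a b ! (l+m)"
        using h v2[of "i+m"] v2[of "j+m"] v2[of "l+m"] lb by simp
      moreover have "i + m < j + m" "j + m < l + m" "l + m < length (ssum a b)" using h lb ls by auto
      ultimately show False using av unfolding av123_def by blast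
    qed
  next
    assume "av123 a \<and> av123 b"
    then have ava: "av123 a" and avb: "av123 b" by auto
    show "av123 (ssum a b)" unfolding av123_def
    proof (intro allI impI notI)
      fix i j l assume h: "i < j" "j < l" "l < length (ssum a b)" "ssum a b!i < ssum a b!j \<and> ssum a b!j < ssum a b!l"
      consider "l < m" | "m \<le> i" | "i < m" "m \<le> l" by linarith
      then show False
      proof cases
        case 1
        then have "a!i < a!j \<and> a!j < a!l" using h v1[of i] v1[of j] v1[of l] by simp
        then show False using ava h 1 la unfolding av123_def by blast
      next
        case 2
        then have "b!(i-m) < b!(j-m) \<and> b!(j-m) < b!(l-m)" using h ls v2[of i] v2[of j] v2[of l] by simp
        moreover have "i - m < j - m" "j - m < l - m" "l - m < length b" using h 2 lb ls by auto
        ultimately show False using avb unfolding av123_def by blast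
      next
        case 3
        then have "n < ssum a b ! i" "ssum a b ! l \<le> n" using v1[of i] v2[of l] h ls by auto
        then show False using h by linarith
      qed
    qed
  qed
qed

lemma cnt_ssum1:
  assumes a: "a \<in> perms_of m" and b: "b \<in> perms_of n" and xy: "x < m" "y < m"
  shows "cnt (ssum a b) x y = cnt a x y"
proof -
  have "{p. p < x \<and> ssum a b ! p < ssum a b ! y} = {p. p < x \<and> a ! p < a ! y}"
    using ssum_vals(1)[OF a b] xy by auto
  then show ?thesis unfolding cnt_def by simp
qed

lemma cnt_ssum2:
  assumes a: "a \<in> perms_of m" and b: "b \<in> perms_of n" and xy: "x < n" "y < n"
  shows "cnt (ssum a b) (x + m) (y + m) = cnt b x y"
proof -
  note v1 = ssum_vals(1)[OF a b] and v2 = ssum_vals(2)[OF a b]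
  have "{p. p < x + m \<and> ssum a b ! p < ssum a b ! (y + m)} = (\<lambda>q. q + m) ` {p. p < x \<and> b ! p < b ! y}"
  proof (rule set_eqI, rule iffI)
    fix p assume p: "p \<in> {p. p < x + m \<and> ssum a b ! p < ssum a b ! (y + m)}"
    have "ssum a b ! (y + m) \<le> n" using v2[of "y+m"] xy by simp
    have "\<not> p < m"
    proof
      assume "p < m"
      then have "n < ssum a b ! p" using v1[of p] by blast
      then show False using p \<open>ssum a b ! (y + m) \<le> n\<close> by simp
    qed
    then have "m \<le> p" by simp
    then show "p \<in> (\<lambda>q. q + m) ` {p. p < x \<and> b ! p < b ! y}"
      using p v2[of p] v2[of "y+m"] xy by (auto intro!: image_eqI[of _ _ "p - m"])
  next
    fix p assume "p \<in> (\<lambda>q. q + m) ` {p. p < x \<and> b ! p < b ! y}"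
    then obtain q where "p = q + m" "q < x" "b!q < b!y" by auto
    then show "p \<in> {p. p < x + m \<and> ssum a b ! p < ssum a b ! (y + m)}"
      using v2[of p] v2[of "y+m"] xy by simp
  qed
  moreover have "inj_on (\<lambda>q. q + m) {p. p < x \<and> b ! p < b ! y}" by (simp add: inj_on_def)
  ultimately show ?thesis unfolding cnt_def by (simp add: card_image)
qed

lemma cnt_ssum3:
  assumes a: "a \<in> perms_of m" and b: "b \<in> perms_of n" and xy: "x < m" "m \<le> y" "y < m + n"
  shows "cnt (ssum a b) x y = 0"
proof -
  note v1 = ssum_vals(1)[OF a b] and v2 = ssum_vals(2)[OF a b]
  have sy: "ssum a b ! y \<le> n" using v2[of y] xy by simp
  have "\<forall>p. p < x \<longrightarrow> \<not> ssum a b ! p < ssum a b ! y"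
  proof (intro allI impI)
    fix p assume "p < x"
    then have "n < ssum a b ! p" using v1[of p] xy by simp
    then show "\<not> ssum a b ! p < ssum a b ! y" using sy by simp
  qed
  then have "{p. p < x \<and> ssum a b ! p < ssum a b ! y} = {}" by auto
  then show ?thesis unfolding cnt_def by simp
qed

lemma okh_ssum:
  assumes a: "a \<in> perms_of m" and b: "b \<in> perms_of n"
  shows "okh h (ssum a b) \<longleftrightarrow> okh h a \<and> okh h b"
proof -
  have la: "length a = m" and lb: "length b = n" using a b perms_len by auto
  have ls: "length (ssum a b) = m + n" using ssum_len la lb by simp
  note v1 = ssum_vals(1)[OF a b] and v2 = ssum_vals(2)[OF a b]
  show ?thesis
  proof (intro iffI conjI)
    assume ok: "okh h (ssum a b)"
    show "okh h a" unfolding okh_def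
    proof (intro allI impI)
      fix x y assume h: "x < y" "y < length a" "a!y < a!x"
      have "ssum a b ! y < ssum a b ! x" using h v1[of x] v1[of y] la by simp
      then have "cnt (ssum a b) x y \<le> h" using ok h la ls unfolding okh_def by simp
      then show "cnt a x y \<le> h" using cnt_ssum1[OF a b, of x y] h la by simp
    qed
    show "okh h b" unfolding okh_def
    proof (intro allI impI)
      fix x y assume h: "x < y" "y < length b" "b!y < b!x"
      have "ssum a b ! (y+m) < ssum a b ! (x+m)" using h v2[of "x+m"] v2[of "y+m"] lb by simp
      then have "cnt (ssum a b) (x+m) (y+m) \<le> h" using ok h lb ls unfolding okh_def by simp
      then show "cnt b x y \<le> h" using cnt_ssum2[OF a b, of x y] h lb by simp
    qed
  next
    assume "okh h a \<and> okh h b"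
    then have oa: "okh h a" and ob: "okh h b" by auto
    show "okh h (ssum a b)" unfolding okh_def
    proof (intro allI impI)
      fix x y assume h: "x < y" "y < length (ssum a b)" "ssum a b ! y < ssum a b ! x"
      consider "y < m" | "m \<le> x" | "x < m" "m \<le> y" by linarith
      then show "cnt (ssum a b) x y \<le> h"
      proof cases
        case 1
        then have "a!y < a!x" using h v1[of x] v1[of y] by simp
        then show ?thesis using oa h 1 la cnt_ssum1[OF a b, of x y] unfolding okh_def by simp
      next
        case 2
        have e: "x = (x - m) + m" "y = (y - m) + m" using 2 h by auto
        have "b!(y-m) < b!(x-m)" using h ls 2 v2[of x] v2[of y] by simp
        moreover have "x - m < y - m" "y - m < length b" using h 2 lb ls by auto
        ultimately have "cnt b (x-m) (y-m) \<le> h" using ob unfolding okh_def by blast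
        moreover have "cnt (ssum a b) ((x-m)+m) ((y-m)+m) = cnt b (x-m) (y-m)"
          by (rule cnt_ssum2[OF a b]) (use h 2 lb ls in auto)
        ultimately show ?thesis using e by simp
      next
        case 3
        then show ?thesis using cnt_ssum3[OF a b, of x y] h ls by simp
      qed
    qed
  qed
qed

lemma ssum_not_less:
  assumes a: "a \<in> perms_of m" and b: "b \<in> perms_of (n - m)" and m: "1 \<le> m" "m \<le> n"
    and a': "a' \<in> perms_of m'" "si a'" and b': "b' \<in> perms_of (n - m')" and m': "m' \<le> n"
    and eq: "ssum a b = ssum a' b'"
  shows "\<not> m < m'"
proof
  assume mm: "m < m'"
  have la': "length a' = m'" using a' perms_len by auto
  have "\<exists>p<m. a'!p \<le> m' - m" using a'(2) mm m unfolding si_def la' by simp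
  then obtain p where p: "p < m" "a'!p \<le> m' - m" by blast
  have "ssum a' b' ! p = a'!p + (n - m')" using ssum_vals(1)[OF a'(1) b'] p mm by simp
  also have "\<dots> \<le> n - m" using p m' mm by simp
  finally have "ssum a b ! p \<le> n - m" using eq by simp
  moreover have "n - m < ssum a b ! p" using ssum_vals(1)[OF a b] p by blast
  ultimately show False by simp
qed

lemma ssum_inj:
  assumes a: "a \<in> perms_of m" "si a" and b: "b \<in> perms_of (n - m)" and m: "1 \<le> m" "m \<le> n"
    and a': "a' \<in> perms_of m'" "si a'" and b': "b' \<in> perms_of (n - m')" and m': "1 \<le> m'" "m' \<le> n"
    and eq: "ssum a b = ssum a' b'"
  shows "m = m' \<and> a = a' \<and> b = b'"
proof -
  have "\<not> m < m'" using ssum_not_less[OF a(1) b m a' b' m'(2) eq] .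
  moreover have "\<not> m' < m" using ssum_not_less[OF a'(1) b' m' a b m(2) eq[symmetric]] .
  ultimately have mm: "m = m'" by simp
  have la: "length a = m" and la': "length a' = m" and lb: "length b = n - m" and lb': "length b' = n - m"
    using a a' b b' mm perms_len by auto
  have "take m (ssum a b) = map (\<lambda>x. x + (n - m)) a" unfolding ssum_def using la lb by simp
  moreover have "take m (ssum a' b') = map (\<lambda>x. x + (n - m)) a'" unfolding ssum_def using la' lb' by simp
  ultimately have "map (\<lambda>x. x + (n - m)) a = map (\<lambda>x. x + (n - m)) a'" using eq by simp
  then have aa: "a = a'" by (simp add: inj_map_eq_map inj_on_def)
  have d1: "drop m (ssum a b) = b" unfolding ssum_def using la by simp
  have d2: "drop m (ssum a' b') = b'" unfolding ssum_def using la' by simp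
  have "b = b'" using d1 d2 eq by metis
  then show ?thesis using mm aa by blast
qed

lemma skew_exists:
  assumes s: "s \<in> perms_of n" and n: "1 \<le> n"
  shows "\<exists>m a b. 1 \<le> m \<and> m \<le> n \<and> a \<in> perms_of m \<and> si a \<and> b \<in> perms_of (n - m) \<and> s = ssum a b"
proof -
  have ls: "length s = n" using s perms_len by simp
  have ds: "distinct s" using s perms_distinct by simp
  define P where "P j \<longleftrightarrow> 1 \<le> j \<and> (\<forall>p<j. n - j < s!p)" for j
  have Pn: "P n" unfolding P_def using n perms_nth[OF s] by fastforce
  define m where "m = (LEAST j. P j)"
  have Pm: "P m" unfolding m_def using Pn by (rule LeastI)
  have mn: "m \<le> n" unfolding m_def using Pn by (rule Least_le)
  have m1: "1 \<le> m" using Pm P_def by simp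
  have top: "\<And>p. p < m \<Longrightarrow> n - m < s!p" using Pm P_def by simp
  define T where "T = set (take m s)"
  have T1: "T \<subseteq> {n-m+1..n}"
  proof
    fix x assume "x \<in> T"
    then obtain p where p: "p < m" "x = s!p" unfolding T_def using mn ls by (auto simp: in_set_conv_nth)
    then show "x \<in> {n-m+1..n}" using top[of p] perms_nth[OF s, of p] mn by auto
  qed
  have cT: "card T = m" unfolding T_def using ds mn ls by (simp add: distinct_card)
  have T: "T = {n-m+1..n}" using T1 cT mn by (simp add: card_subset_eq)
  define a where "a = map (\<lambda>x. x - (n - m)) (take m s)"
  define b where "b = drop m s"
  have la: "length a = m" unfolding a_def using mn ls by simp
  have lb: "length b = n - m" unfolding b_def using ls by simp
  have ap: "a \<in> perms_of m"
  proof (rule perms_of_I)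
    have "inj_on (\<lambda>x. x - (n - m)) T" using T by (auto simp: inj_on_def)
    then show "distinct a" unfolding a_def using ds T_def by (simp add: distinct_map)
    show "length a = m" by (rule la)
    show "\<forall>x\<in>set a. 1 \<le> x \<and> x \<le> m" unfolding a_def using T T_def mn by auto
  qed
  have bp: "b \<in> perms_of (n - m)"
  proof (rule perms_of_I)
    show "distinct b" unfolding b_def using ds by simp
    show "length b = n - m" by (rule lb)
    have disj: "set (take m s) \<inter> set (drop m s) = {}"
      using ds distinct_append[of "take m s" "drop m s"] append_take_drop_id[of m s] by simp
    have "set (drop m s) \<subseteq> {1..n}" using s set_drop_subset[of m s] unfolding perms_of_def by simp
    then show "\<forall>x\<in>set b. 1 \<le> x \<and> x \<le> n - m"
    proof -
      assume sd: "set (drop m s) \<subseteq> {1..n}"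
      show ?thesis
      proof
        fix x assume x: "x \<in> set b"
        then have "x \<in> {1..n}" using sd unfolding b_def by blast
        moreover have "x \<notin> T" using x disj unfolding b_def T_def by blast
        ultimately show "1 \<le> x \<and> x \<le> n - m" using T by auto
      qed
    qed
  qed
  have "map (\<lambda>x. x + (n - m)) a = take m s"
    unfolding a_def map_map by (rule map_idI) (use T T_def in auto)
  then have seq: "s = ssum a b" unfolding ssum_def lb unfolding b_def by simp
  have sia: "si a" unfolding si_def la
  proof (intro allI impI)
    fix j assume j: "0 < j" "j < m"
    have "\<not> P j" using j(2) unfolding m_def by (rule not_less_Least)
    then obtain p where p: "p < j" "s!p \<le> n - j" using j unfolding P_def by auto
    have "a!p = s!p - (n - m)" unfolding a_def using p j mn ls by simp
    then have "a!p \<le> m - j" using p j mn by linarith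
    then show "\<exists>p<j. a!p \<le> m - j" using p by blast
  qed
  show ?thesis using m1 mn ap sia bp seq by blast
qed

lemma card_AA_rec:
  assumes n: "1 \<le> n"
  shows "card (AA h n) = (\<Sum>m=1..n. card (SI h m) * card (AA h (n - m)))"
proof -
  define S where "S = (SIGMA m:{1..n}. SI h m \<times> AA h (n - m))"
  define f where "f = (\<lambda>(m::nat, (a::nat list, b::nat list)). ssum a b)"
  have "bij_betw f S (AA h n)"
  proof (rule bij_betwI')
    fix x y assume x: "x \<in> S" and y: "y \<in> S"
    obtain m a b where xe: "x = (m, (a, b))" by (cases x) auto
    obtain m' a' b' where ye: "y = (m', (a', b'))" by (cases y) auto
    have hx: "1 \<le> m" "m \<le> n" "a \<in> perms_of m" "si a" "b \<in> perms_of (n - m)"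
      using x xe unfolding S_def SI_def AA_def by auto
    have hy: "1 \<le> m'" "m' \<le> n" "a' \<in> perms_of m'" "si a'" "b' \<in> perms_of (n - m')"
      using y ye unfolding S_def SI_def AA_def by auto
    show "(f x = f y) = (x = y)"
    proof
      assume "f x = f y"
      then have "ssum a b = ssum a' b'" unfolding f_def xe ye by simp
      then have "m = m' \<and> a = a' \<and> b = b'"
        using ssum_inj[OF hx(3,4) hx(5) hx(1,2) hy(3,4) hy(5) hy(1,2)] by blast
      then show "x = y" using xe ye by simp
    qed simp
  next
    fix x assume x: "x \<in> S"
    obtain m a b where xe: "x = (m, (a, b))" by (cases x) auto
    have hx: "1 \<le> m" "m \<le> n" "a \<in> AA h m" "b \<in> AA h (n - m)"
      using x xe unfolding S_def SI_def by auto
    have ap: "a \<in> perms_of m" and bp: "b \<in> perms_of (n - m)" using hx unfolding AA_def by auto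
    have "ssum a b \<in> perms_of n" using ssum_perm[OF ap bp] hx by simp
    moreover have "av123 (ssum a b)" using av123_ssum[OF ap bp] hx unfolding AA_def by simp
    moreover have "okh h (ssum a b)" using okh_ssum[OF ap bp] hx unfolding AA_def by simp
    ultimately show "f x \<in> AA h n" unfolding f_def xe AA_def by simp
  next
    fix s assume s: "s \<in> AA h n"
    then have sp: "s \<in> perms_of n" unfolding AA_def by simp
    obtain m a b where h: "1 \<le> m" "m \<le> n" "a \<in> perms_of m" "si a" "b \<in> perms_of (n - m)" "s = ssum a b"
      using skew_exists[OF sp n] by blast
    have "av123 a \<and> av123 b" using av123_ssum[OF h(3) h(5)] s h(6) unfolding AA_def by simp
    moreover have "okh h a \<and> okh h b" using okh_ssum[OF h(3) h(5)] s h(6) unfolding AA_def by simp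
    ultimately have "(m, (a, b)) \<in> S" unfolding S_def SI_def AA_def using h by simp
    moreover have "s = f (m, (a, b))" unfolding f_def using h by simp
    ultimately show "\<exists>x\<in>S. s = f x" by blast
  qed
  then have "card (AA h n) = card S" by (simp add: bij_betw_same_card)
  also have "\<dots> = (\<Sum>m=1..n. card (SI h m \<times> AA h (n - m)))"
    unfolding S_def using SI_finite AA_finite by (simp add: card_SigmaI)
  also have "\<dots> = (\<Sum>m=1..n. card (SI h m) * card (AA h (n - m)))"
    by (simp add: card_cartesian_product)
  finally show ?thesis .
qed


definition pmin :: "nat list \<Rightarrow> nat \<Rightarrow> nat" where
  "pmin s i = Min (set (take (Suc i) s))"

definition rot :: "nat list \<Rightarrow> nat list" where
  "rot s = map (\<lambda>i. max (s!(Suc i)) (pmin s i) - 1) [0..<length s - 1]"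

lemma rot_len: "length (rot s) = length s - 1"
  unfolding rot_def by simp

lemma rot_nth: "i < length s - 1 \<Longrightarrow> rot s ! i = max (s!(Suc i)) (pmin s i) - 1"
  unfolding rot_def by simp

lemma pmin_le: "p \<le> i \<Longrightarrow> i < length s \<Longrightarrow> pmin s i \<le> s!p"
  unfolding pmin_def by (rule Min_le) (auto simp: in_set_conv_nth intro!: exI[of _ p])

lemma pmin_ex: "i < length s \<Longrightarrow> \<exists>p\<le>i. s!p = pmin s i"
proof -
  assume i: "i < length s"
  have "set (take (Suc i) s) \<noteq> {}" using i by (cases s) auto
  then have "pmin s i \<in> set (take (Suc i) s)" unfolding pmin_def by (rule Min_in[rotated]) simp
  then obtain p where "p < length (take (Suc i) s)" "take (Suc i) s ! p = pmin s i"
    by (auto simp: in_set_conv_nth)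
  then show ?thesis using i by (intro exI[of _ p]) auto
qed

lemma pmin_mono: "j \<le> i \<Longrightarrow> i < length s \<Longrightarrow> pmin s i \<le> pmin s j"
proof -
  assume ji: "j \<le> i" "i < length s"
  obtain p where "p \<le> j" "s!p = pmin s j" using pmin_ex[of j s] ji by auto
  then show ?thesis using pmin_le[of p i s] ji by simp
qed

lemma pmin_Suc: "Suc i < length s \<Longrightarrow> pmin s (Suc i) = min (pmin s i) (s ! Suc i)"
proof -
  assume i: "Suc i < length s"
  have "take (Suc (Suc i)) s = take (Suc i) s @ [s ! Suc i]" using i by (simp add: take_Suc_conv_app_nth)
  moreover have "set (take (Suc i) s) \<noteq> {}" using i by (cases s) auto
  ultimately show ?thesis unfolding pmin_def by (simp add: Min_insert min.commute)
qed

lemma dnth: "distinct s \<Longrightarrow> x < length s \<Longrightarrow> y < length s \<Longrightarrow> x \<noteq> y \<Longrightarrow> s!x \<noteq> s!y"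
  by (simp add: nth_eq_iff_index_eq)

lemma rot_X_ge2:
  assumes d: "distinct s" and i: "Suc i < length s" and pos: "\<forall>x\<in>set s. 1 \<le> x"
  shows "2 \<le> max (s!(Suc i)) (pmin s i)"
proof -
  obtain p where p: "p \<le> i" "s!p = pmin s i" using pmin_ex[of i s] i by auto
  have ne: "s!p \<noteq> s!(Suc i)" using dnth[OF d, of p "Suc i"] p i by simp
  have "s!p \<in> set s" by (rule nth_mem) (use p(1) i in simp)
  have "s!(Suc i) \<in> set s" using i by simp
  have "1 \<le> s!p" "1 \<le> s!(Suc i)" using pos \<open>s!p \<in> set s\<close> \<open>s!(Suc i) \<in> set s\<close> by auto
  then show ?thesis using p ne by linarith
qed

lemma rot_X_inj:
  assumes d: "distinct s" and ii: "i < i'" "Suc i' < length s"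
  shows "max (s!(Suc i)) (pmin s i) \<noteq> max (s!(Suc i')) (pmin s i')"
proof
  assume eq: "max (s!(Suc i)) (pmin s i) = max (s!(Suc i')) (pmin s i')"
  obtain p where p: "p \<le> i" "s!p = pmin s i" using pmin_ex[of i s] ii by auto
  obtain p' where p': "p' \<le> i'" "s!p' = pmin s i'" using pmin_ex[of i' s] ii by auto
  have inj: "\<And>x y. x < length s \<Longrightarrow> y < length s \<Longrightarrow> s!x = s!y \<Longrightarrow> x = y"
    using d by (simp add: nth_eq_iff_index_eq)
  have m1: "pmin s i' \<le> pmin s (Suc i)" using pmin_mono[of "Suc i" i' s] ii by simp
  have m2: "pmin s (Suc i) \<le> s!(Suc i)" using pmin_le[of "Suc i" "Suc i" s] ii by simp
  have m3: "pmin s i' \<le> pmin s i" using pmin_mono[of i i' s] ii by simp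
  consider "s!(Suc i) \<ge> pmin s i" "s!(Suc i') \<ge> pmin s i'" | "s!(Suc i) \<ge> pmin s i" "s!(Suc i') < pmin s i'"
    | "s!(Suc i) < pmin s i" "s!(Suc i') \<ge> pmin s i'" | "s!(Suc i) < pmin s i" "s!(Suc i') < pmin s i'" by linarith
  then show False
  proof cases
    case 1
    then have "s!(Suc i) = s!(Suc i')" using eq by simp
    then show False using inj[of "Suc i" "Suc i'"] ii by simp
  next
    case 2
    then have "s!(Suc i) = pmin s i'" using eq by simp
    then have "pmin s i = s!(Suc i)" using 2 m1 m2 m3 by linarith
    then show False using inj[of p "Suc i"] p ii by simp
  next
    case 3
    then have "pmin s i = s!(Suc i')" using eq by simp
    then show False using inj[of p "Suc i'"] p ii by simp
  next
    case 4
    then have "pmin s i = pmin s i'" using eq by simp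
    then show False using 4 m1 m2 by linarith
  qed
qed

lemma rot_perm:
  assumes s: "s \<in> perms_of m" and m: "1 \<le> m"
  shows "rot s \<in> perms_of (m - 1)"
proof (rule perms_of_I)
  have ls: "length s = m" using s perms_len by simp
  have d: "distinct s" using s perms_distinct by simp
  have pos: "\<forall>x\<in>set s. 1 \<le> x" and le: "\<forall>x\<in>set s. x \<le> m" using s unfolding perms_of_def by auto
  show "length (rot s) = m - 1" using rot_len ls by simp
  show "distinct (rot s)"
  proof (subst distinct_conv_nth, intro allI impI)
    fix i j assume h: "i < length (rot s)" "j < length (rot s)" "i \<noteq> j"
    have ge: "\<And>k. k < length (rot s) \<Longrightarrow> 2 \<le> max (s!(Suc k)) (pmin s k)"
      using rot_X_ge2[OF d _ pos] rot_len by simp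
    have hi: "Suc i < length s" "Suc j < length s" using h rot_len by auto
    have "max (s!(Suc i)) (pmin s i) \<noteq> max (s!(Suc j)) (pmin s j)"
    proof (cases "i < j")
      case True then show ?thesis using rot_X_inj[OF d True hi(2)] by simp
    next
      case False then have "j < i" using h by simp
      then show ?thesis using rot_X_inj[OF d _ hi(1), of j] by simp
    qed
    moreover have "rot s ! i = max (s!(Suc i)) (pmin s i) - 1" "rot s ! j = max (s!(Suc j)) (pmin s j) - 1"
      using h rot_nth rot_len by auto
    ultimately show "rot s ! i \<noteq> rot s ! j" using h ge[of i] ge[of j] by arith
  qed
  show "\<forall>x\<in>set (rot s). 1 \<le> x \<and> x \<le> m - 1"
  proof
    fix x assume "x \<in> set (rot s)"
    then obtain i where i: "i < length (rot s)" "x = rot s ! i" by (auto simp: in_set_conv_nth)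
    have "2 \<le> max (s!(Suc i)) (pmin s i)" using rot_X_ge2[OF d _ pos] i rot_len by simp
    moreover have "s!(Suc i) \<le> m" using le i rot_len ls by simp
    moreover have "pmin s i \<le> s!0" using pmin_le[of 0 i s] i rot_len by simp
    moreover have "s!0 \<le> m" using le i rot_len ls by simp
    ultimately show "1 \<le> x \<and> x \<le> m - 1" using i rot_nth rot_len by auto
  qed
qed

lemma rot_av123:
  assumes s: "s \<in> perms_of m" and av: "av123 s"
  shows "av123 (rot s)"
  unfolding av123_def
proof (intro allI impI notI)
  fix i j l assume h: "i < j" "j < l" "l < length (rot s)" "rot s ! i < rot s ! j \<and> rot s ! j < rot s ! l"
  have ls: "length s = m" using s perms_len by simp
  have d: "distinct s" using s perms_distinct by simp
  have pos: "\<forall>x\<in>set s. 1 \<le> x" using s unfolding perms_of_def by auto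
  define X where "X k = max (s!(Suc k)) (pmin s k)" for k
  have lt: "Suc l < length s" using h rot_len by simp
  have ge: "\<And>k. k \<le> l \<Longrightarrow> 2 \<le> X k" unfolding X_def using rot_X_ge2[OF d _ pos] lt by simp
  have rn: "\<And>k. k \<le> l \<Longrightarrow> rot s ! k = X k - 1" unfolding X_def using rot_nth lt by simp
  have X: "X i < X j" "X j < X l" using h rn[of i] rn[of j] rn[of l] ge[of i] ge[of j] ge[of l] by auto
  have pi: "pmin s i \<le> X i" unfolding X_def by simp
  have pj: "pmin s j \<le> pmin s i" "pmin s l \<le> pmin s i" using pmin_mono h lt by auto
  have Xj: "X j = s!(Suc j)" using X pi pj unfolding X_def by (simp add: max_def split: if_splits)
  have Xl: "X l = s!(Suc l)" using X pi pj unfolding X_def by (simp add: max_def split: if_splits)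
  obtain q where q: "q \<le> Suc i" "s!q = X i"
  proof (cases "pmin s i \<le> s!(Suc i)")
    case True then show ?thesis using that[of "Suc i"] unfolding X_def by simp
  next
    case False
    obtain p where "p \<le> i" "s!p = pmin s i" using pmin_ex[of i s] h lt by auto
    then show ?thesis using that[of p] False unfolding X_def by simp
  qed
  have "s!q < s!(Suc j) \<and> s!(Suc j) < s!(Suc l)" using q X Xj Xl by simp
  moreover have "q < Suc j" "Suc j < Suc l" using q h by auto
  ultimately show False using av lt unfolding av123_def by blast
qed

lemma card_nonmin:
  assumes "finite (P :: nat set)"
  shows "card {p \<in> P. \<exists>q\<in>P. q < p} = card P - 1"
proof (cases "P = {}")
  case True then show ?thesis by simp
next
  case False
  have "{p \<in> P. \<exists>q\<in>P. q < p} = P - {Min P}"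
  proof (rule set_eqI, rule iffI)
    fix p assume "p \<in> {p \<in> P. \<exists>q\<in>P. q < p}"
    then obtain q where "p \<in> P" "q \<in> P" "q < p" by auto
    then show "p \<in> P - {Min P}" using Min_le[OF assms, of q] by auto
  next
    fix p assume p: "p \<in> P - {Min P}"
    then have "Min P < p" using Min_le[OF assms, of p] by auto
    then show "p \<in> {p \<in> P. \<exists>q\<in>P. q < p}" using p Min_in[OF assms False] by auto
  qed
  then show ?thesis using assms False by (simp add: Min_in)
qed

lemma key_card:
  assumes al: "Suc a' < length s"
  shows "card {p'. p' < a' \<and> max (s!(Suc p')) (pmin s p') < v} = card {p. p < Suc a' \<and> s!p < v} - 1"
proof -
  define P where "P = {p. p < Suc a' \<and> s!p < v}"
  have fP: "finite P" unfolding P_def by simp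
  have "{p'. p' < a' \<and> max (s!(Suc p')) (pmin s p') < v} = {p'. Suc p' \<in> {p \<in> P. \<exists>q\<in>P. q < p}}"
  proof (rule set_eqI, rule iffI)
    fix p' assume "p' \<in> {p'. p' < a' \<and> max (s!(Suc p')) (pmin s p') < v}"
    then have h: "p' < a'" "s!(Suc p') < v" "pmin s p' < v" by auto
    obtain q where q: "q \<le> p'" "s!q = pmin s p'" using pmin_ex[of p' s] h al by auto
    have "q \<in> P" "q < Suc p'" "Suc p' \<in> P" unfolding P_def using h q by auto
    then show "p' \<in> {p'. Suc p' \<in> {p \<in> P. \<exists>q\<in>P. q < p}}" by blast
  next
    fix p' assume "p' \<in> {p'. Suc p' \<in> {p \<in> P. \<exists>q\<in>P. q < p}}"
    then obtain q where h: "Suc p' < Suc a'" "s!(Suc p') < v" "q < Suc p'" "s!q < v" unfolding P_def by auto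
    have "pmin s p' \<le> s!q" using pmin_le[of q p' s] h al by simp
    then show "p' \<in> {p'. p' < a' \<and> max (s!(Suc p')) (pmin s p') < v}" using h by auto
  qed
  also have "\<dots> = (\<lambda>p. p - 1) ` {p \<in> P. \<exists>q\<in>P. q < p}"
  proof (rule set_eqI, rule iffI)
    fix x assume "x \<in> {p'. Suc p' \<in> {p \<in> P. \<exists>q\<in>P. q < p}}"
    then show "x \<in> (\<lambda>p. p - 1) ` {p \<in> P. \<exists>q\<in>P. q < p}" by (intro image_eqI[of _ _ "Suc x"]) auto
  next
    fix x assume "x \<in> (\<lambda>p. p - 1) ` {p \<in> P. \<exists>q\<in>P. q < p}"
    then obtain p q where "x = p - 1" "p \<in> P" "q \<in> P" "q < p" by auto
    then show "x \<in> {p'. Suc p' \<in> {p \<in> P. \<exists>q\<in>P. q < p}}" by (cases p) auto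
  qed
  finally have eq: "{p'. p' < a' \<and> max (s!(Suc p')) (pmin s p') < v} = (\<lambda>p. p - 1) ` {p \<in> P. \<exists>q\<in>P. q < p}" .
  have "inj_on (\<lambda>p. p - 1) {p \<in> P. \<exists>q\<in>P. q < p}" by (auto simp: inj_on_def)
  then have "card {p'. p' < a' \<and> max (s!(Suc p')) (pmin s p') < v} = card {p \<in> P. \<exists>q\<in>P. q < p}"
    unfolding eq by (simp add: card_image)
  also have "\<dots> = card P - 1" by (rule card_nonmin[OF fP])
  finally show ?thesis unfolding P_def .
qed

lemma rot_okh:
  assumes s: "s \<in> perms_of m" and h1: "1 \<le> h"
  shows "okh h s \<longleftrightarrow> okh (h - 1) (rot s)"
proof -
  have ls: "length s = m" using s perms_len by simp
  have d: "distinct s" using s perms_distinct by simp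
  have pos: "\<forall>x\<in>set s. 1 \<le> x" using s unfolding perms_of_def by auto
  define X where "X k = max (s!(Suc k)) (pmin s k)" for k
  have ge: "\<And>k. Suc k < m \<Longrightarrow> 2 \<le> X k" unfolding X_def using rot_X_ge2[OF d _ pos] ls by simp
  have rn: "\<And>k. Suc k < m \<Longrightarrow> rot s ! k = X k - 1" unfolding X_def using rot_nth ls by simp
  have rlt: "\<And>x y. Suc x < m \<Longrightarrow> Suc y < m \<Longrightarrow> (rot s ! x < rot s ! y) = (X x < X y)"
  proof -
    fix x y assume "Suc x < m" "Suc y < m"
    then have "2 \<le> X x" "2 \<le> X y" "rot s ! x = X x - 1" "rot s ! y = X y - 1" using rn ge by auto
    then show "(rot s ! x < rot s ! y) = (X x < X y)" by linarith
  qed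
  have cr: "\<And>a' b'. Suc b' < m \<Longrightarrow> a' < b' \<Longrightarrow> cnt (rot s) a' b' = card {p'. p' < a' \<and> X p' < X b'}"
  proof -
    fix a' b' assume ab: "Suc b' < m" "a' < b'"
    have "{p. p < a' \<and> rot s ! p < rot s ! b'} = {p'. p' < a' \<and> X p' < X b'}"
      using rlt ab by auto
    then show "cnt (rot s) a' b' = card {p'. p' < a' \<and> X p' < X b'}" unfolding cnt_def by simp
  qed
  show ?thesis
  proof
    assume ok: "okh h s"
    show "okh (h - 1) (rot s)" unfolding okh_def
    proof (intro allI impI)
      fix a' b' assume ab: "a' < b'" "b' < length (rot s)" "rot s ! b' < rot s ! a'"
      have bm: "Suc b' < m" using ab rot_len ls by simp
      have Xba: "X b' < X a'" using rlt[of b' a'] ab bm by simp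
      show "cnt (rot s) a' b' \<le> h - 1"
      proof (rule ccontr)
        assume "\<not> cnt (rot s) a' b' \<le> h - 1"
        then have c: "h - 1 < card {p'. p' < a' \<and> X p' < X b'}" using cr[OF bm ab(1)] by simp
        then have "{p'. p' < a' \<and> X p' < X b'} \<noteq> {}" by (metis card.empty not_less_zero)
        then obtain p0 where p0: "p0 < a'" "X p0 < X b'" by blast
        have m1: "pmin s b' \<le> pmin s p0" "pmin s a' \<le> pmin s p0"
          using pmin_mono[of p0 b' s] pmin_mono[of p0 a' s] p0 ab bm ls by auto
        have Xb: "X b' = s!(Suc b')" using p0 m1 unfolding X_def by (simp add: max_def split: if_splits)
        have Xa: "X a' = s!(Suc a')" using p0 m1 Xba unfolding X_def by (simp add: max_def split: if_splits)
        have "card {p'. p' < a' \<and> X p' < X b'} = card {p. p < Suc a' \<and> s!p < s!(Suc b')} - 1"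
          unfolding X_def Xb[unfolded X_def] using key_card[of a' s] ab bm ls by simp
        then have "h < cnt s (Suc a') (Suc b')" unfolding cnt_def using c h1 by linarith
        moreover have "s!(Suc b') < s!(Suc a')" using Xba Xa Xb by simp
        moreover have "Suc a' < Suc b'" "Suc b' < length s" using ab bm ls by auto
        ultimately show False using ok unfolding okh_def by (meson leD)
      qed
    qed
  next
    assume ok: "okh (h - 1) (rot s)"
    show "okh h s" unfolding okh_def
    proof (intro allI impI)
      fix a b assume ab: "a < b" "b < length s" "s!b < s!a"
      show "cnt s a b \<le> h"
      proof (rule ccontr)
        assume "\<not> cnt s a b \<le> h"
        then have c: "h < card {p. p < a \<and> s!p < s!b}" unfolding cnt_def by simp
        then have "{p. p < a \<and> s!p < s!b} \<noteq> {}" by (metis card.empty not_less_zero)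
        then obtain p0 where p0: "p0 < a" "s!p0 < s!b" by blast
        obtain a' where a': "a = Suc a'" using p0 by (cases a) auto
        obtain b' where b': "b = Suc b'" using ab by (cases b) auto
        have bm: "Suc b' < m" using ab b' ls by simp
        have m1: "pmin s b' \<le> s!p0" "pmin s a' \<le> s!p0" using pmin_le p0 ab a' b' bm ls by auto
        have Xb: "X b' = s!b" using p0 m1 b' unfolding X_def by simp
        have Xa: "X a' = s!a" using p0 m1 a' ab unfolding X_def by simp
        have "card {p'. p' < a' \<and> X p' < X b'} = card {p. p < a \<and> s!p < s!b} - 1"
          unfolding X_def Xb[unfolded X_def] a' using key_card[of a' s] ab a' ls by simp
        then have "h - 1 < cnt (rot s) a' b'" using cr[of b' a'] bm ab a' b' c h1 by simp
        moreover have "rot s ! b' < rot s ! a'" using rlt[of b' a'] Xa Xb ab a' b' bm by simp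
        moreover have "a' < b'" "b' < length (rot s)" using ab a' b' rot_len ls by auto
        ultimately show False using ok unfolding okh_def by (meson leD)
      qed
    qed
  qed
qed


definition isL :: "nat list \<Rightarrow> nat \<Rightarrow> bool" where
  "isL s i \<longleftrightarrow> i < length s \<and> (\<forall>p<i. s!i < s!p) \<and> s!i + i < length s"

definition nxt :: "nat list \<Rightarrow> nat \<Rightarrow> nat" where
  "nxt s q = (if \<exists>l. q \<le> l \<and> isL s l then s!(LEAST l. q \<le> l \<and> isL s l) + 1 else 1)"

definition psi :: "nat list \<Rightarrow> nat list" where
  "psi s = map (\<lambda>q. if q = 0 \<or> isL s (q - 1) then nxt s q else s!(q - 1) + 1) [0..<Suc (length s)]"

lemma psi_len: "length (psi s) = Suc (length s)"
  unfolding psi_def by simp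

lemma psi_nthP: "q \<le> length s \<Longrightarrow> q = 0 \<or> isL s (q - 1) \<Longrightarrow> psi s ! q = nxt s q"
  unfolding psi_def by (simp del: upt_Suc add: nth_map_upt)

lemma psi_nthN: "q \<le> length s \<Longrightarrow> \<not> (q = 0 \<or> isL s (q - 1)) \<Longrightarrow> psi s ! q = s!(q - 1) + 1"
  unfolding psi_def by (simp del: upt_Suc add: nth_map_upt)

lemma isL_dec: "isL s l' \<Longrightarrow> l < l' \<Longrightarrow> s!l' < s!l"
  unfolding isL_def by blast

lemma nxt_some:
  assumes "isL s l" "q \<le> l"
  obtains l0 where "isL s l0" "q \<le> l0" "l0 \<le> l" "nxt s q = s!l0 + 1"
    "\<And>l'. q \<le> l' \<Longrightarrow> isL s l' \<Longrightarrow> l0 \<le> l'"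
proof -
  let ?l0 = "LEAST l. q \<le> l \<and> isL s l"
  have ex: "\<exists>l. q \<le> l \<and> isL s l" using assms by blast
  have "q \<le> ?l0 \<and> isL s ?l0" by (rule LeastI_ex[OF ex])
  moreover have "\<And>l'. q \<le> l' \<Longrightarrow> isL s l' \<Longrightarrow> ?l0 \<le> l'" by (simp add: Least_le)
  moreover have "nxt s q = s!?l0 + 1" unfolding nxt_def using ex by simp
  ultimately show ?thesis using that assms by blast
qed

lemma nxt_none: "\<not> (\<exists>l. q \<le> l \<and> isL s l) \<Longrightarrow> nxt s q = 1"
  unfolding nxt_def by (rule if_not_P)

lemma nxt_ge1: "1 \<le> nxt s q"
  unfolding nxt_def by simp

lemma nxt_cong:
  assumes e: "\<And>l. (q \<le> l \<and> isL s l) = (q' \<le> l \<and> isL s l)"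
  shows "nxt s q = nxt s q'"
proof -
  have ex: "(\<exists>l. q \<le> l \<and> isL s l) = (\<exists>l. q' \<le> l \<and> isL s l)" using e by blast
  have le: "(LEAST l. q \<le> l \<and> isL s l) = (LEAST l. q' \<le> l \<and> isL s l)" using e by simp
  show ?thesis unfolding nxt_def ex le ..
qed

lemma nxt_self: "isL s i \<Longrightarrow> nxt s i = s!i + 1"
proof -
  assume "isL s i"
  then obtain l0 where "isL s l0" "i \<le> l0" "l0 \<le> i" "nxt s i = s!l0 + 1"
    using nxt_some[of s i i] by blast
  then show ?thesis by simp
qed

lemma nxt_anti:
  assumes "q \<le> i"
  shows "nxt s i \<le> nxt s q"
proof (cases "\<exists>l. i \<le> l \<and> isL s l")
  case False then show ?thesis using nxt_none[OF False] nxt_ge1[of s q] by simp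
next
  case True
  then obtain l where l: "i \<le> l" "isL s l" by blast
  obtain l1 where l1: "isL s l1" "i \<le> l1" "nxt s i = s!l1 + 1" using nxt_some[OF l(2) l(1)] by blast
  obtain l0 where l0: "isL s l0" "q \<le> l0" "l0 \<le> l1" "nxt s q = s!l0 + 1"
  proof -
    have "q \<le> l1" using assms l1(2) by simp
    then show ?thesis using nxt_some[OF l1(1), of q] that by blast
  qed
  show ?thesis
  proof (cases "l0 = l1")
    case True then show ?thesis using l0 l1 by simp
  next
    case False then have "l0 < l1" using l0 by simp
    then show ?thesis using isL_dec[OF l1(1) \<open>l0 < l1\<close>] l0(4) l1(3) by simp
  qed
qed

lemma psi_ge_nxt:
  assumes q: "q \<le> i" "i \<le> length s"
  shows "nxt s i \<le> psi s ! q"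
proof (cases "q = 0 \<or> isL s (q - 1)")
  case True
  then have "psi s ! q = nxt s q" using psi_nthP q by simp
  then show ?thesis using nxt_anti[OF q(1)] by simp
next
  case False
  then have e: "psi s ! q = s!(q - 1) + 1" using psi_nthN q by simp
  show ?thesis
  proof (cases "\<exists>l. i \<le> l \<and> isL s l")
    case True
    then obtain l where "i \<le> l" "isL s l" by blast
    then obtain l1 where l1: "isL s l1" "i \<le> l1" "nxt s i = s!l1 + 1" using nxt_some by blast
    have "q - 1 < l1" using False q l1 by linarith
    then have "s!l1 < s!(q - 1)" using isL_dec[OF l1(1)] by simp
    then show ?thesis using e l1 by simp
  next
    case False
    then show ?thesis using nxt_none e by simp
  qed
qed

lemma psi_attains:
  assumes i: "i \<le> length s"
  shows "\<exists>q\<le>i. psi s ! q = nxt s i"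
proof (cases "\<exists>l. l < i \<and> isL s l")
  case True
  define l1 where "l1 = Max {l. l < i \<and> isL s l}"
  have fin: "finite {l. l < i \<and> isL s l}" by simp
  have l1in: "l1 < i \<and> isL s l1" unfolding l1_def using Max_in[OF fin] True by auto
  have l1max: "\<And>l. l < i \<Longrightarrow> isL s l \<Longrightarrow> l \<le> l1" unfolding l1_def using Max_ge[OF fin] by auto
  have "psi s ! (Suc l1) = nxt s (Suc l1)" using psi_nthP[of "Suc l1" s] l1in i by simp
  also have "\<dots> = nxt s i"
  proof (rule nxt_cong)
    fix l show "(Suc l1 \<le> l \<and> isL s l) = (i \<le> l \<and> isL s l)"
      using l1in l1max[of l] by (cases "l < i") auto
  qed
  finally show ?thesis using l1in by (intro exI[of _ "Suc l1"]) simp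
next
  case False
  have "psi s ! 0 = nxt s 0" using psi_nthP[of 0 s] by simp
  also have "\<dots> = nxt s i"
  proof (rule nxt_cong)
    fix l show "(0 \<le> l \<and> isL s l) = (i \<le> l \<and> isL s l)" using False by (cases "l < i") auto
  qed
  finally show ?thesis by (intro exI[of _ 0]) simp
qed

lemma pmin_psi:
  assumes i: "i \<le> length s"
  shows "pmin (psi s) i = nxt s i"
  unfolding pmin_def
proof (rule Min_eqI)
  show "finite (set (take (Suc i) (psi s)))" by simp
next
  fix y assume "y \<in> set (take (Suc i) (psi s))"
  then obtain q where q: "q < length (take (Suc i) (psi s))" "y = take (Suc i) (psi s) ! q"
    by (auto simp: in_set_conv_nth)
  then have "q \<le> i" "y = psi s ! q" using psi_len i by auto
  then show "nxt s i \<le> y" using psi_ge_nxt i by simp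
next
  obtain q where q: "q \<le> i" "psi s ! q = nxt s i" using psi_attains[OF i] by blast
  have "q < length (take (Suc i) (psi s))" using q i psi_len by simp
  moreover have "take (Suc i) (psi s) ! q = psi s ! q" using q by simp
  ultimately show "nxt s i \<in> set (take (Suc i) (psi s))" using q(2) by (metis nth_mem)
qed

lemma rot_psi:
  assumes s: "s \<in> perms_of n"
  shows "rot (psi s) = s"
proof (rule nth_equalityI)
  have ls: "length s = n" using s perms_len by simp
  show "length (rot (psi s)) = length s" using rot_len psi_len by simp
  fix i assume "i < length (rot (psi s))"
  then have i: "i < n" using rot_len psi_len ls by simp
  have pos: "1 \<le> s!i" using perms_nth[OF s i] by simp
  have r: "rot (psi s) ! i = max (psi s ! Suc i) (nxt s i) - 1"
    using rot_nth[of i "psi s"] pmin_psi[of i s] psi_len i ls by simp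
  show "rot (psi s) ! i = s ! i"
  proof (cases "isL s i")
    case True
    have a: "psi s ! Suc i = nxt s (Suc i)" using psi_nthP[of "Suc i" s] True i ls by simp
    have b: "nxt s i = s!i + 1" using nxt_self[OF True] .
    have c: "nxt s (Suc i) \<le> s!i"
    proof (cases "\<exists>l. Suc i \<le> l \<and> isL s l")
      case True
      then obtain l where "Suc i \<le> l" "isL s l" by blast
      then obtain l0 where l0: "isL s l0" "Suc i \<le> l0" "nxt s (Suc i) = s!l0 + 1" using nxt_some by blast
      then show ?thesis using isL_dec[OF l0(1), of i] by simp
    next
      case False then show ?thesis using nxt_none pos by simp
    qed
    show ?thesis using r a b c by simp
  next
    case False
    have a: "psi s ! Suc i = s!i + 1" using psi_nthN[of "Suc i" s] False i ls by simp
    have c: "nxt s i \<le> s!i + 1"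
    proof (cases "\<exists>l. i \<le> l \<and> isL s l")
      case True
      then obtain l where "i \<le> l" "isL s l" by blast
      then obtain l0 where l0: "isL s l0" "i \<le> l0" "nxt s i = s!l0 + 1" using nxt_some by blast
      have "i < l0" using l0 False by (cases "i = l0") auto
      then show ?thesis using isL_dec[OF l0(1), of i] l0 by simp
    next
      case False then show ?thesis using nxt_none by simp
    qed
    show ?thesis using r a c by simp
  qed
qed

lemma nxt_Suc_le:
  assumes s: "s \<in> perms_of n" and L: "isL s i"
  shows "nxt s (Suc i) \<le> s!i"
proof (cases "\<exists>l. Suc i \<le> l \<and> isL s l")
  case True
  then obtain l where "Suc i \<le> l" "isL s l" by blast
  then obtain l0 where l0: "isL s l0" "Suc i \<le> l0" "nxt s (Suc i) = s!l0 + 1" using nxt_some by blast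
  then show ?thesis using isL_dec[OF l0(1), of i] by simp
next
  case False
  have "i < n" using L perms_len[OF s] unfolding isL_def by simp
  then show ?thesis using nxt_none[OF False] perms_nth[OF s] by simp
qed

lemma psi_vals:
  assumes s: "s \<in> perms_of n" and q: "q \<le> n"
  shows "1 \<le> psi s ! q \<and> psi s ! q \<le> Suc n"
proof -
  have ls: "length s = n" using s perms_len by simp
  show ?thesis
  proof (cases "q = 0 \<or> isL s (q - 1)")
    case True
    then have e: "psi s ! q = nxt s q" using psi_nthP q ls by simp
    show ?thesis
    proof (cases "\<exists>l. q \<le> l \<and> isL s l")
      case True
      then obtain l where "q \<le> l" "isL s l" by blast
      then obtain l0 where l0: "isL s l0" "nxt s q = s!l0 + 1" using nxt_some by blast
      have "l0 < n" using l0 ls unfolding isL_def by simp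
      then show ?thesis using e l0 perms_nth[OF s] by simp
    next
      case False then show ?thesis using e nxt_none by simp
    qed
  next
    case False
    then have "psi s ! q = s!(q - 1) + 1" "q - 1 < n" using psi_nthN q ls by auto
    then show ?thesis using perms_nth[OF s] by simp
  qed
qed

lemma psi_ne:
  assumes s: "s \<in> perms_of n" and q: "q1 < q2" "q2 \<le> n"
  shows "psi s ! q1 \<noteq> psi s ! q2"
proof -
  have ls: "length s = n" using s perms_len by simp
  have d: "distinct s" using s perms_distinct by simp
  have pos: "\<And>k. k < n \<Longrightarrow> 1 \<le> s!k" using perms_nth[OF s] by simp
  have Ln: "\<And>l. isL s l \<Longrightarrow> l < n" using ls unfolding isL_def by simp
  have dn: "\<And>x y. x < n \<Longrightarrow> y < n \<Longrightarrow> x \<noteq> y \<Longrightarrow> s!x \<noteq> s!y" using dnth[OF d] ls by simp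
  show ?thesis
  proof (cases "q1 = 0 \<or> isL s (q1 - 1)")
    case P1: True
    have e1: "psi s ! q1 = nxt s q1" using psi_nthP[of q1 s] P1 q ls by simp
    show ?thesis
    proof (cases "q2 = 0 \<or> isL s (q2 - 1)")
      case P2: True
      have e2: "psi s ! q2 = nxt s q2" using psi_nthP P2 q ls by simp
      have L2: "isL s (q2 - 1)" "q1 \<le> q2 - 1" using P2 q by auto
      obtain l1 where l1: "isL s l1" "l1 \<le> q2 - 1" "nxt s q1 = s!l1 + 1" using nxt_some[OF L2] by blast
      show ?thesis
      proof (cases "\<exists>l. q2 \<le> l \<and> isL s l")
        case True
        then obtain l where "q2 \<le> l" "isL s l" by blast
        then obtain l2 where l2: "isL s l2" "q2 \<le> l2" "nxt s q2 = s!l2 + 1" using nxt_some by blast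
        have "l1 < l2" using l1 l2 q by linarith
        then have "s!l2 < s!l1" using isL_dec[OF l2(1)] by blast
        then show ?thesis using e1 e2 l1 l2 by simp
      next
        case False
        then show ?thesis using nxt_none e1 e2 l1 pos[OF Ln[OF l1(1)]] by simp
      qed
    next
      case N2: False
      have e2: "psi s ! q2 = s!(q2 - 1) + 1" using psi_nthN N2 q ls by simp
      show ?thesis
      proof (cases "\<exists>l. q1 \<le> l \<and> isL s l")
        case True
        then obtain l where "q1 \<le> l" "isL s l" by blast
        then obtain l1 where l1: "isL s l1" "nxt s q1 = s!l1 + 1" using nxt_some by blast
        have "l1 \<noteq> q2 - 1" using l1 N2 by auto
        then have "s!l1 \<noteq> s!(q2 - 1)" using dn Ln[OF l1(1)] q by simp
        then show ?thesis using e1 e2 l1 by simp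
      next
        case False
        have "q2 - 1 < n" using q by linarith
        then show ?thesis using nxt_none[OF False] e1 e2 pos[of "q2 - 1"] by simp
      qed
    qed
  next
    case N1: False
    have e1: "psi s ! q1 = s!(q1 - 1) + 1" using psi_nthN[of q1 s] N1 q ls by simp
    show ?thesis
    proof (cases "q2 = 0 \<or> isL s (q2 - 1)")
      case P2: True
      have e2: "psi s ! q2 = nxt s q2" using psi_nthP P2 q ls by simp
      show ?thesis
      proof (cases "\<exists>l. q2 \<le> l \<and> isL s l")
        case True
        then obtain l where "q2 \<le> l" "isL s l" by blast
        then obtain l2 where l2: "isL s l2" "nxt s q2 = s!l2 + 1" using nxt_some by blast
        have "l2 \<noteq> q1 - 1" using l2 N1 by auto
        then have "s!l2 \<noteq> s!(q1 - 1)" using dn Ln[OF l2(1)] q by simp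
        then show ?thesis using e1 e2 l2 by simp
      next
        case False
        have "q1 - 1 < n" using q by linarith
        then show ?thesis using nxt_none[OF False] e1 e2 pos[of "q1 - 1"] by simp
      qed
    next
      case N2: False
      have e2: "psi s ! q2 = s!(q2 - 1) + 1" using psi_nthN N2 q ls by simp
      have "q1 - 1 < n" "q2 - 1 < n" "q1 - 1 \<noteq> q2 - 1" using N1 q by auto
      then have "s!(q1 - 1) \<noteq> s!(q2 - 1)" using dn by blast
      then show ?thesis using e1 e2 by simp
    qed
  qed
qed

lemma psi_perm:
  assumes s: "s \<in> perms_of n"
  shows "psi s \<in> perms_of (Suc n)"
proof (rule perms_of_I)
  have ls: "length s = n" using s perms_len by simp
  show "length (psi s) = Suc n" using psi_len ls by simp
  show "distinct (psi s)"
  proof (subst distinct_conv_nth, intro allI impI)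
    fix i j assume h: "i < length (psi s)" "j < length (psi s)" "i \<noteq> j"
    then have "i \<le> n" "j \<le> n" using psi_len ls by auto
    then show "psi s ! i \<noteq> psi s ! j" using psi_ne[OF s, of i j] psi_ne[OF s, of j i] h
      by (cases "i < j") auto
  qed
  show "\<forall>x\<in>set (psi s). 1 \<le> x \<and> x \<le> Suc n"
  proof
    fix x assume "x \<in> set (psi s)"
    then obtain q where "q < length (psi s)" "x = psi s ! q" by (auto simp: in_set_conv_nth)
    then show "1 \<le> x \<and> x \<le> Suc n" using psi_vals[OF s, of q] psi_len ls by simp
  qed
qed

lemma psi_si:
  assumes s: "s \<in> perms_of n"
  shows "si (psi s)"
  unfolding si_def
proof (intro allI impI)
  fix j assume j: "0 < j" "j < length (psi s)"
  have ls: "length s = n" using s perms_len by simp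
  define i where "i = j - 1"
  have i: "i < n" "j = Suc i" using j psi_len ls unfolding i_def by auto
  obtain q where q: "q \<le> i" "psi s ! q = nxt s i" using psi_attains[of i s] i ls by auto
  have "nxt s i \<le> n - i"
  proof (cases "\<exists>l. i \<le> l \<and> isL s l")
    case True
    then obtain l where "i \<le> l" "isL s l" by blast
    then obtain l0 where l0: "isL s l0" "i \<le> l0" "nxt s i = s!l0 + 1" using nxt_some by blast
    then show ?thesis using ls unfolding isL_def by linarith
  next
    case False then show ?thesis using nxt_none i by simp
  qed
  then show "\<exists>p<j. psi s ! p \<le> length (psi s) - j" using q i psi_len ls by (intro exI[of _ q]) simp
qed


lemma psi_Pmin:
  assumes s: "s \<in> perms_of n" and q: "1 \<le> q" "q \<le> n" "isL s (q - 1)" and q': "q' < q"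
  shows "psi s ! q < psi s ! q'"
proof -
  have ls: "length s = n" using s perms_len by simp
  have "psi s ! q = nxt s q" using psi_nthP[of q s] q ls by simp
  also have "\<dots> \<le> s!(q - 1)" using nxt_Suc_le[OF s q(3)] q by simp
  also have "\<dots> < nxt s (q - 1)" using nxt_self[OF q(3)] by simp
  also have "\<dots> \<le> psi s ! q'" using psi_ge_nxt[of q' "q - 1" s] q q' ls by simp
  finally show ?thesis .
qed

lemma psi_av123:
  assumes s: "s \<in> perms_of n" and av: "av123 s"
  shows "av123 (psi s)"
  unfolding av123_def
proof (intro allI impI notI)
  fix a b c assume h: "a < b" "b < c" "c < length (psi s)" "psi s ! a < psi s ! b \<and> psi s ! b < psi s ! c"
  have ls: "length s = n" using s perms_len by simp
  have d: "distinct s" using s perms_distinct by simp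
  have cn: "c \<le> n" using h psi_len ls by simp
  have Nb: "\<not> (b = 0 \<or> isL s (b - 1))"
  proof
    assume "b = 0 \<or> isL s (b - 1)"
    then have "isL s (b - 1)" "1 \<le> b" using h by auto
    then have "psi s ! b < psi s ! a" using psi_Pmin[OF s] h cn by simp
    then show False using h by simp
  qed
  have Nc: "\<not> (c = 0 \<or> isL s (c - 1))"
  proof
    assume "c = 0 \<or> isL s (c - 1)"
    then have "isL s (c - 1)" "1 \<le> c" using h by auto
    then have "psi s ! c < psi s ! b" using psi_Pmin[OF s] h cn by simp
    then show False using h by simp
  qed
  define j where "j = b - 1"
  define l where "l = c - 1"
  have jl: "j < l" "l < n" "b = Suc j" "c = Suc l" using h Nb Nc cn unfolding j_def l_def by auto
  have eb: "psi s ! b = s!j + 1" using psi_nthN[of b s] Nb jl ls unfolding j_def by simp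
  have ec: "psi s ! c = s!l + 1" using psi_nthN[of c s] Nc jl ls unfolding l_def by simp
  have sjl: "s!j < s!l" using h eb ec by simp
  have LR: "\<forall>p<j. s!j < s!p"
  proof (intro allI impI)
    fix p assume p: "p < j"
    show "s!j < s!p"
    proof (rule ccontr)
      assume "\<not> s!j < s!p"
      moreover have "s!p \<noteq> s!j" using dnth[OF d, of p j] p jl ls by simp
      ultimately have "s!p < s!j" by simp
      then show False using av p jl sjl ls unfolding av123_def by blast
    qed
  qed
  have nL: "\<not> isL s j" using Nb unfolding j_def by simp
  then have big: "n \<le> s!j + j" using LR jl ls unfolding isL_def by auto
  define A where "A = insert l {..j}"
  have cA: "card A = j + 2" unfolding A_def using jl by simp
  have sub: "(\<lambda>p. s!p) ` A \<subseteq> {s!j..n}"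
  proof
    fix x assume "x \<in> (\<lambda>p. s!p) ` A"
    then obtain p where p: "p \<in> A" "x = s!p" by auto
    have "p < n" using p jl unfolding A_def by auto
    then have "s!p \<le> n" using perms_nth[OF s] by simp
    moreover have "s!j \<le> s!p" using p LR sjl unfolding A_def by (cases "p = j") (auto simp: less_imp_le)
    ultimately show "x \<in> {s!j..n}" using p by simp
  qed
  have inj: "inj_on (\<lambda>p. s!p) A"
  proof (rule inj_onI)
    fix x y assume "x \<in> A" "y \<in> A" "s!x = s!y"
    moreover have "x < n" "y < n" using \<open>x \<in> A\<close> \<open>y \<in> A\<close> jl unfolding A_def by auto
    ultimately show "x = y" using d ls nth_eq_iff_index_eq by metis
  qed
  have "card A \<le> card {s!j..n}" using card_inj_on_le[OF inj sub] by simp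
  then have "j + 2 \<le> n + 1 - s!j" using cA by simp
  then show False using big perms_nth[OF s, of j] jl by linarith
qed

lemma perm_count_gt:
  assumes s: "s \<in> perms_of m" and v: "v \<le> m"
  shows "card {q. q < m \<and> v < s!q} = m - v"
proof -
  have ls: "length s = m" using s perms_len by simp
  have d: "distinct s" using s perms_distinct by simp
  have "bij_betw (\<lambda>q. s!q) {q. q < m \<and> v < s!q} {v<..m}"
  proof (rule bij_betw_imageI)
    show "inj_on (\<lambda>q. s!q) {q. q < m \<and> v < s!q}" using d ls by (auto simp: inj_on_def nth_eq_iff_index_eq)
    show "(\<lambda>q. s!q) ` {q. q < m \<and> v < s!q} = {v<..m}"
    proof (rule set_eqI, rule iffI)
      fix x assume "x \<in> (\<lambda>q. s!q) ` {q. q < m \<and> v < s!q}"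
      then show "x \<in> {v<..m}" using perms_nth[OF s] by auto
    next
      fix x assume x: "x \<in> {v<..m}"
      then have "x \<in> set s" using s v unfolding perms_of_def by auto
      then obtain q where "q < m" "s!q = x" using ls by (auto simp: in_set_conv_nth)
      then show "x \<in> (\<lambda>q. s!q) ` {q. q < m \<and> v < s!q}" using x by auto
    qed
  qed
  then show ?thesis by (simp add: bij_betw_same_card)
qed

lemma Lchar:
  assumes s: "s \<in> perms_of m" and av: "av123 s" and sis: "si s" and i: "Suc i < m"
  shows "isL (rot s) i \<longleftrightarrow> s!(Suc i) < pmin s i"
proof -
  have ls: "length s = m" using s perms_len by simp
  have d: "distinct s" using s perms_distinct by simp
  have pos: "\<forall>x\<in>set s. 1 \<le> x" using s unfolding perms_of_def by auto
  have rp: "rot s \<in> perms_of (m - 1)" using rot_perm[OF s] i by simp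
  have lr: "length (rot s) = m - 1" using rot_len ls by simp
  define X where "X k = max (s!(Suc k)) (pmin s k)" for k
  have ge: "\<And>k. Suc k < m \<Longrightarrow> 2 \<le> X k" unfolding X_def using rot_X_ge2[OF d _ pos] ls by simp
  have rn: "\<And>k. Suc k < m \<Longrightarrow> rot s ! k = X k - 1" unfolding X_def using rot_nth ls by simp
  obtain p0 where p0: "p0 \<le> i" "s!p0 = pmin s i" using pmin_ex[of i s] i ls by auto
  show ?thesis
  proof
    assume L: "isL (rot s) i"
    show "s!(Suc i) < pmin s i"
    proof (rule ccontr)
      assume "\<not> s!(Suc i) < pmin s i"
      moreover have "s!(Suc i) \<noteq> s!p0" using dnth[OF d, of "Suc i" p0] p0 i ls by simp
      ultimately have gt: "pmin s i < s!(Suc i)" using p0 by simp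
      then have ri: "rot s ! i = s!(Suc i) - 1" using rn[OF i] unfolding X_def by simp
      have "rot s ! i + i < m - 1" using L lr unfolding isL_def by simp
      then have small: "s!(Suc i) + i < m" using ri perms_nth[OF s i] by linarith
      have sub: "{q. q < m \<and> s!(Suc i) < s!q} \<subseteq> {..i} - {p0}"
      proof
        fix q assume q: "q \<in> {q. q < m \<and> s!(Suc i) < s!q}"
        have "\<not> Suc i < q"
        proof
          assume "Suc i < q"
          moreover have "s!p0 < s!(Suc i)" using gt p0 by simp
          moreover have "p0 < Suc i" "q < length s" "s!(Suc i) < s!q" using p0 q ls by auto
          ultimately show False using av unfolding av123_def by blast
        qed
        moreover have "q \<noteq> Suc i" using q by auto
        moreover have "q \<noteq> p0" using q gt p0 by auto
        ultimately show "q \<in> {..i} - {p0}" by auto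
      qed
      have "m - s!(Suc i) = card {q. q < m \<and> s!(Suc i) < s!q}"
        using perm_count_gt[OF s, of "s!(Suc i)"] perms_nth[OF s i] by simp
      also have "\<dots> \<le> card ({..i} - {p0})" by (rule card_mono) (use sub in auto)
      also have "\<dots> = i" using p0 by simp
      finally show False using small by linarith
    qed
  next
    assume lt: "s!(Suc i) < pmin s i"
    have ri: "rot s ! i = pmin s i - 1" using rn[OF i] lt unfolding X_def by simp
    have "\<forall>p<i. rot s ! i < rot s ! p"
    proof (intro allI impI)
      fix p assume p: "p < i"
      have "pmin s i \<le> pmin s p" using pmin_mono[of p i s] p i ls by simp
      then have "rot s ! i \<le> rot s ! p" using ri rn[of p] p i unfolding X_def by simp
      moreover have "rot s ! i \<noteq> rot s ! p" using dnth[OF perms_distinct[OF rp], of i p] p i lr by simp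
      ultimately show "rot s ! i < rot s ! p" by simp
    qed
    moreover have "rot s ! i + i < length (rot s)"
    proof -
      have "\<exists>q<Suc i. s!q \<le> m - Suc i" using sis i ls unfolding si_def by simp
      then obtain q where "q < Suc i" "s!q \<le> m - Suc i" by blast
      then have "pmin s i \<le> m - Suc i" using pmin_le[of q i s] i ls by simp
      then show ?thesis using ri lr i by simp
    qed
    ultimately show "isL (rot s) i" unfolding isL_def using lr i by simp
  qed
qed

lemma pmin_stable:
  assumes "\<And>k. q \<le> k \<Longrightarrow> k < r \<Longrightarrow> \<not> s!(Suc k) < pmin s k" and "r < length s" and "q \<le> r"
  shows "pmin s r = pmin s q"
  using assms
proof (induction r)
  case 0 then show ?case by simp
next
  case (Suc r)
  show ?case
  proof (cases "q = Suc r")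
    case True then show ?thesis by simp
  next
    case False
    then have qr: "q \<le> r" using Suc by simp
    have "pmin s (Suc r) = min (pmin s r) (s!(Suc r))" using pmin_Suc Suc by simp
    also have "\<dots> = pmin s r" using Suc.prems(1)[of r] qr by simp
    also have "\<dots> = pmin s q" using Suc qr by simp
    finally show ?thesis .
  qed
qed

lemma pmin_last:
  assumes s: "s \<in> perms_of m" and m: "1 \<le> m"
  shows "pmin s (m - 1) = 1"
proof -
  have "take (Suc (m - 1)) s = s" using s perms_len m by simp
  then have "pmin s (m - 1) = Min {1..m}" unfolding pmin_def using s unfolding perms_of_def by simp
  moreover have "Min {1..m} = (1::nat)" by (rule Min_eqI) (use m in auto)
  ultimately show ?thesis by simp
qed

lemma psi_rot:
  assumes s: "s \<in> perms_of m" and av: "av123 s" and sis: "si s" and m: "1 \<le> m"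
  shows "psi (rot s) = s"
proof (rule nth_equalityI)
  have ls: "length s = m" using s perms_len by simp
  have lr: "length (rot s) = m - 1" using rot_len ls by simp
  have d: "distinct s" using s perms_distinct by simp
  have pos: "\<forall>x\<in>set s. 1 \<le> x" using s unfolding perms_of_def by auto
  show "length (psi (rot s)) = length s" using psi_len lr ls m by simp
  fix q assume "q < length (psi (rot s))"
  then have q: "q < m" using psi_len lr ls m by simp
  show "psi (rot s) ! q = s ! q"
  proof (cases "q = 0 \<or> isL (rot s) (q - 1)")
    case False
    then have e: "psi (rot s) ! q = rot s ! (q - 1) + 1" using psi_nthN[of q "rot s"] q lr by simp
    have q1: "Suc (q - 1) = q" "Suc (q - 1) < m" using False q by auto
    have "\<not> s!q < pmin s (q - 1)" using Lchar[OF s av sis q1(2)] False q1 by simp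
    then have "rot s ! (q - 1) = s!q - 1" using rot_nth[of "q - 1" s] q1 ls by simp
    moreover have "1 \<le> s!q" using perms_nth[OF s q] by simp
    ultimately show ?thesis using e by simp
  next
    case True
    then have e: "psi (rot s) ! q = nxt (rot s) q" using psi_nthP[of q "rot s"] q lr by simp
    have sq: "s!q = pmin s q"
    proof (cases "q = 0")
      case True then show ?thesis unfolding pmin_def using q ls by (cases s) auto
    next
      case False
      then have L: "isL (rot s) (q - 1)" using True by simp
      have q1: "Suc (q - 1) = q" "Suc (q - 1) < m" using False q by auto
      have "s!q < pmin s (q - 1)" using Lchar[OF s av sis q1(2)] L q1 by simp
      then show ?thesis using pmin_Suc[of "q - 1" s] q1 ls by simp
    qed
    have stab: "\<And>r. (\<And>k. q \<le> k \<Longrightarrow> k < r \<Longrightarrow> \<not> isL (rot s) k) \<Longrightarrow> r < m \<Longrightarrow> q \<le> r \<Longrightarrow> pmin s r = pmin s q"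
    proof -
      fix r assume h: "\<And>k. q \<le> k \<Longrightarrow> k < r \<Longrightarrow> \<not> isL (rot s) k" "r < m" "q \<le> r"
      show "pmin s r = pmin s q"
      proof (rule pmin_stable)
        fix k assume k: "q \<le> k" "k < r"
        then show "\<not> s!(Suc k) < pmin s k" using h(1)[OF k] Lchar[OF s av sis, of k] h(2) by simp
      qed (use h ls in auto)
    qed
    show ?thesis
    proof (cases "\<exists>l. q \<le> l \<and> isL (rot s) l")
      case True
      then obtain l where "q \<le> l" "isL (rot s) l" by blast
      then obtain l0 where l0: "isL (rot s) l0" "q \<le> l0" "nxt (rot s) q = rot s ! l0 + 1"
        "\<And>l'. q \<le> l' \<Longrightarrow> isL (rot s) l' \<Longrightarrow> l0 \<le> l'" using nxt_some by blast
      have l0m: "Suc l0 < m" using l0(1) lr unfolding isL_def by linarith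
      have lt: "s!(Suc l0) < pmin s l0" using Lchar[OF s av sis l0m] l0 by simp
      have "rot s ! l0 = pmin s l0 - 1" using rot_nth[of l0 s] l0m ls lt by simp
      moreover have "1 \<le> pmin s l0"
      proof -
        obtain p where "p \<le> l0" "s!p = pmin s l0" using pmin_ex[of l0 s] l0m ls by auto
        then show ?thesis using perms_nth[OF s, of p] l0m by simp
      qed
      moreover have "pmin s l0 = pmin s q"
      proof (rule stab)
        fix k assume "q \<le> k" "k < l0"
        then show "\<not> isL (rot s) k" using l0(4)[of k] by (meson leD)
      qed (use l0 l0m in auto)
      ultimately show ?thesis using e l0(3) sq by simp
    next
      case False
      have "pmin s (m - 1) = pmin s q"
        by (rule stab) (use False q in auto)
      then show ?thesis using e nxt_none[OF False] sq pmin_last[OF s m] by simp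
    qed
  qed
qed

lemma card_SI_rec:
  assumes h: "1 \<le> h" and m: "1 \<le> m"
  shows "card (SI h m) = card (AA (h - 1) (m - 1))"
proof -
  have "bij_betw rot (SI h m) (AA (h - 1) (m - 1))"
  proof (rule bij_betwI')
    fix x y assume "x \<in> SI h m" "y \<in> SI h m"
    then have "psi (rot x) = x" "psi (rot y) = y" using psi_rot m unfolding SI_def AA_def by auto
    then show "(rot x = rot y) = (x = y)" by metis
  next
    fix x assume x: "x \<in> SI h m"
    then have xp: "x \<in> perms_of m" "av123 x" "okh h x" unfolding SI_def AA_def by auto
    show "rot x \<in> AA (h - 1) (m - 1)" unfolding AA_def
      using rot_perm[OF xp(1) m] rot_av123[OF xp(1,2)] rot_okh[OF xp(1) h] xp(3) by simp
  next
    fix y assume y: "y \<in> AA (h - 1) (m - 1)"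
    then have yp: "y \<in> perms_of (m - 1)" "av123 y" "okh (h - 1) y" unfolding AA_def by auto
    have pp: "psi y \<in> perms_of m" using psi_perm[OF yp(1)] m by simp
    have rr: "rot (psi y) = y" using rot_psi[OF yp(1)] .
    have "okh h (psi y)" using rot_okh[OF pp h] rr yp(3) by simp
    then have "psi y \<in> SI h m" unfolding SI_def AA_def using pp psi_av123[OF yp(1,2)] psi_si[OF yp(1)] by simp
    then show "\<exists>x\<in>SI h m. y = rot x" using rr by metis
  qed
  then show ?thesis by (rule bij_betw_same_card)
qed


definition dl :: "nat \<Rightarrow> nat list" where
  "dl m = rev [1..<m] @ [m]"

lemma dl_len: "length (dl m) = m" if "1 \<le> m"
  using that unfolding dl_def by simp

lemma dl_nth1: "i < m - 1 \<Longrightarrow> dl m ! i = m - 1 - i"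
  unfolding dl_def by (simp add: nth_append rev_nth)

lemma dl_nth2: "1 \<le> m \<Longrightarrow> dl m ! (m - 1) = m"
  unfolding dl_def by (simp add: nth_append)

lemma dl_SI:
  assumes m: "1 \<le> m"
  shows "dl m \<in> SI 0 m"
proof -
  have l: "length (dl m) = m" using dl_len m by simp
  have v: "\<And>i. i < m \<Longrightarrow> dl m ! i = (if i < m - 1 then m - 1 - i else m)"
  proof -
    fix i assume i: "i < m"
    show "dl m ! i = (if i < m - 1 then m - 1 - i else m)"
    proof (cases "i < m - 1")
      case True then show ?thesis using dl_nth1 by simp
    next
      case False then have "i = m - 1" using i by simp
      then show ?thesis using dl_nth2 m by simp
    qed
  qed
  have dec: "\<And>i j. i < j \<Longrightarrow> j < m - 1 \<Longrightarrow> dl m ! j < dl m ! i"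
    using dl_nth1 by simp
  have top: "\<And>i. i < m - 1 \<Longrightarrow> dl m ! i < m" using dl_nth1 by simp
  have perm: "dl m \<in> perms_of m"
  proof (rule perms_of_I)
    show "length (dl m) = m" by (rule l)
    show "distinct (dl m)"
    proof (subst distinct_conv_nth, intro allI impI)
      fix i j assume "i < length (dl m)" "j < length (dl m)" "i \<noteq> j"
      then have h: "i < m" "j < m" "i \<noteq> j" using l by auto
      show "dl m ! i \<noteq> dl m ! j"
      proof (cases "i < j")
        case True
        show ?thesis
        proof (cases "j < m - 1")
          case True then show ?thesis using dec[of i j] \<open>i < j\<close> by simp
        next
          case False then have "j = m - 1" using h by simp
          then show ?thesis using top[of i] dl_nth2 m \<open>i < j\<close> by simp
        qed
      next
        case False then have ji: "j < i" using h by simp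
        show ?thesis
        proof (cases "i < m - 1")
          case True then show ?thesis using dec[of j i] ji by simp
        next
          case False then have "i = m - 1" using h by simp
          then show ?thesis using top[of j] dl_nth2 m ji by simp
        qed
      qed
    qed
    show "\<forall>x\<in>set (dl m). 1 \<le> x \<and> x \<le> m"
    proof
      fix x assume "x \<in> set (dl m)"
      then obtain i where "i < m" "x = dl m ! i" using l by (auto simp: in_set_conv_nth)
      then show "1 \<le> x \<and> x \<le> m" using v by auto
    qed
  qed
  have av: "av123 (dl m)" unfolding av123_def
  proof (intro allI impI notI)
    fix i j k assume h: "i < j" "j < k" "k < length (dl m)" "dl m ! i < dl m ! j \<and> dl m ! j < dl m ! k"
    have "j < m - 1" using h l by simp
    then show False using dec[of i j] h by simp
  qed
  have ok: "okh 0 (dl m)" unfolding okh_def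
  proof (intro allI impI)
    fix a b assume h: "a < b" "b < length (dl m)" "dl m ! b < dl m ! a"
    have bm: "b < m - 1"
    proof (rule ccontr)
      assume "\<not> b < m - 1"
      then have "b = m - 1" using h l by simp
      then show False using h dl_nth2[OF m] top[of a] by simp
    qed
    have "\<And>p. p < a \<Longrightarrow> \<not> dl m ! p < dl m ! b" using dec bm h by (meson less_trans not_less_iff_gr_or_eq)
    then have "{p. p < a \<and> dl m ! p < dl m ! b} = {}" by blast
    then show "cnt (dl m) a b \<le> 0" unfolding cnt_def by simp
  qed
  have si: "si (dl m)" unfolding si_def
  proof (intro allI impI)
    fix j assume j: "0 < j" "j < length (dl m)"
    then have "dl m ! (j - 1) \<le> length (dl m) - j" using v l by simp
    then show "\<exists>p<j. dl m ! p \<le> length (dl m) - j" using j by (intro exI[of _ "j - 1"]) simp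
  qed
  show ?thesis unfolding SI_def AA_def using perm av ok si by simp
qed

lemma SI0_unique:
  assumes s: "s \<in> SI 0 m" and m: "1 \<le> m"
  shows "s = dl m"
proof -
  have sp: "s \<in> perms_of m" and av: "av123 s" and ok: "okh 0 s" and sis: "si s"
    using s unfolding SI_def AA_def by auto
  have ls: "length s = m" using sp perms_len by simp
  have d: "distinct s" using sp perms_distinct by simp
  have "m \<in> set s" using sp m unfolding perms_of_def by simp
  then obtain q where q: "q < m" "s!q = m" using ls by (auto simp: in_set_conv_nth)
  have other: "\<And>r. r < m \<Longrightarrow> r \<noteq> q \<Longrightarrow> s!r < m"
  proof -
    fix r assume "r < m" "r \<noteq> q"
    then have "s!r \<noteq> m" using dnth[OF d, of r q] q ls by simp
    then show "s!r < m" using perms_nth[OF sp \<open>r < m\<close>] by simp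
  qed
  have qm: "q = m - 1"
  proof (rule ccontr)
    assume "q \<noteq> m - 1"
    then have qlt: "Suc q < m" using q by simp
    have bound: "\<And>p. p < q \<Longrightarrow> m - s!p \<le> Suc p"
    proof -
      fix p assume p: "p < q"
      have sub: "{r. r < m \<and> s!p < s!r} \<subseteq> insert q {..<p}"
      proof
        fix r assume r: "r \<in> {r. r < m \<and> s!p < s!r}"
        show "r \<in> insert q {..<p}"
        proof (rule ccontr)
          assume "r \<notin> insert q {..<p}"
          then have rq: "r \<noteq> q" "p \<le> r" by auto
          have "r \<noteq> p" using r by auto
          then have pr: "p < r" using rq by simp
          have srm: "s!r < m" using other[OF _ rq(1)] r by simp
          show False
          proof (cases "r < q")
            case True
            have "s!p < s!r" "s!r < s!q" "q < length s" using r srm q ls by auto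
            then show False using av pr True unfolding av123_def by blast
          next
            case False
            then have qr: "q < r" using rq by simp
            have "p \<in> {p'. p' < q \<and> s!p' < s!r}" using p r by simp
            then have "{p'. p' < q \<and> s!p' < s!r} \<noteq> {}" by blast
            then have "cnt s q r \<noteq> 0" unfolding cnt_def using cnt_finite[of q s r] by simp
            moreover have "cnt s q r \<le> 0" using ok qr r srm q ls unfolding okh_def by simp
            ultimately show False by simp
          qed
        qed
      qed
      have "m - s!p = card {r. r < m \<and> s!p < s!r}"
        using perm_count_gt[OF sp, of "s!p"] perms_nth[OF sp, of p] p q by simp
      also have "\<dots> \<le> card (insert q {..<p})" by (rule card_mono) (use sub in auto)
      also have "\<dots> \<le> Suc p" by (simp add: card_insert_le_m1)
      finally show "m - s!p \<le> Suc p" .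
    qed
    have "\<exists>p<Suc q. s!p \<le> m - Suc q" using sis[unfolded si_def, rule_format, of "Suc q"] qlt ls by simp
    then obtain p where p: "p < Suc q" "s!p \<le> m - Suc q" by blast
    show False
    proof (cases "p = q")
      case True then show False using p q qlt by simp
    next
      case False
      then have "p < q" using p by simp
      then show False using bound[of p] p qlt by linarith
    qed
  qed
  show ?thesis
  proof (rule nth_equalityI)
    show "length s = length (dl m)" using ls dl_len m by simp
    fix i assume "i < length s"
    then have i: "i < m" using ls by simp
    show "s ! i = dl m ! i"
    proof (cases "i = m - 1")
      case True then show ?thesis using q qm dl_nth2 m by simp
    next
      case False
      then have im: "i < m - 1" using i by simp
      have eq: "{r. r < m \<and> s!i < s!r} = insert (m - 1) {..<i}"
      proof (rule set_eqI, rule iffI)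
        fix r assume r: "r \<in> {r. r < m \<and> s!i < s!r}"
        show "r \<in> insert (m - 1) {..<i}"
        proof (rule ccontr)
          assume "r \<notin> insert (m - 1) {..<i}"
          then have "r \<noteq> m - 1" "i \<le> r" by auto
          moreover have "r \<noteq> i" using r by auto
          ultimately have ir: "i < r" "r < m - 1" using r by auto
          have srm: "s!r < m" using other[of r] ir qm by simp
          have "s!i < s!r" "s!r < s!(m - 1)" "m - 1 < length s" using r q qm ls ir srm by auto
          then show False using av ir unfolding av123_def by blast
        qed
      next
        fix r assume r: "r \<in> insert (m - 1) {..<i}"
        show "r \<in> {r. r < m \<and> s!i < s!r}"
        proof (cases "r = m - 1")
          case True
          then show ?thesis using q qm other[of i] im m by simp
        next
          case False
          then have ri: "r < i" using r by simp
          have "s!r \<noteq> s!i" using dnth[OF d, of r i] ri i ls by simp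
          moreover have "\<not> s!r < s!i"
          proof
            assume "s!r < s!i"
            moreover have "s!i < s!(m - 1)" using q qm other[of i] im by simp
            moreover have "m - 1 < length s" using ls m by simp
            ultimately show False using av ri im unfolding av123_def by blast
          qed
          ultimately show ?thesis using ri i by simp
        qed
      qed
      have "m - s!i = card (insert (m - 1) {..<i})"
        using perm_count_gt[OF sp, of "s!i"] perms_nth[OF sp i] eq by simp
      also have "\<dots> = Suc i" using im by simp
      finally show ?thesis using dl_nth1[OF im] perms_nth[OF sp i] by simp
    qed
  qed
qed

lemma card_SI0:
  assumes m: "1 \<le> m"
  shows "card (SI 0 m) = 1"
proof -
  have "SI 0 m = {dl m}" using dl_SI[OF m] SI0_unique[OF _ m] by blast
  then show ?thesis by simp
qed


lemma perms_of_0: "perms_of 0 = {[]}"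
  unfolding perms_of_def by auto

lemma card_AA_0: "card (AA h 0) = 1"
proof -
  have "AA h 0 = {[]}" unfolding AA_def perms_of_0 av123_def okh_def by auto
  then show ?thesis by simp
qed

lemma card_AA_Suc:
  assumes h: "1 \<le> h"
  shows "card (AA h (Suc k)) = (\<Sum>i=0..k. card (AA (h - 1) i) * card (AA h (k - i)))"
proof -
  have "card (AA h (Suc k)) = (\<Sum>m=Suc 0..Suc k. card (SI h m) * card (AA h (Suc k - m)))"
    using card_AA_rec[of "Suc k" h] by simp
  also have "\<dots> = (\<Sum>i=0..k. card (SI h (Suc i)) * card (AA h (Suc k - Suc i)))"
    by (rule sum.shift_bounds_cl_Suc_ivl)
  also have "\<dots> = (\<Sum>i=0..k. card (AA (h - 1) i) * card (AA h (k - i)))"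
    using card_SI_rec[OF h] by simp
  finally show ?thesis .
qed

lemma card_AA0_Suc: "card (AA 0 (Suc k)) = (\<Sum>j=0..k. card (AA 0 j))"
proof -
  have "card (AA 0 (Suc k)) = (\<Sum>m=Suc 0..Suc k. card (SI 0 m) * card (AA 0 (Suc k - m)))"
    using card_AA_rec[of "Suc k" 0] by simp
  also have "\<dots> = (\<Sum>i=0..k. card (SI 0 (Suc i)) * card (AA 0 (Suc k - Suc i)))"
    by (rule sum.shift_bounds_cl_Suc_ivl)
  also have "\<dots> = (\<Sum>i=0..k. card (AA 0 (k - i)))"
    using card_SI0 by simp
  also have "\<dots> = (\<Sum>j=0..k. card (AA 0 j))"
    by (subst sum.atLeastAtMost_rev) simp
  finally show ?thesis .
qed

lemma card_AA0_pow: "card (AA 0 (Suc k)) = 2 ^ k"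
proof -
  have "(\<Sum>j=0..k. card (AA 0 j)) = 2 ^ k" for k
  proof (induction k)
    case 0 then show ?case using card_AA_0 by simp
  next
    case (Suc k)
    have "(\<Sum>j=0..Suc k. card (AA 0 j)) = (\<Sum>j=0..k. card (AA 0 j)) + card (AA 0 (Suc k))" by simp
    also have "\<dots> = 2 ^ k + 2 ^ k" using Suc card_AA0_Suc[of k] by simp
    finally show ?case by simp
  qed
  then show ?thesis using card_AA0_Suc by simp
qed

definition G :: "nat \<Rightarrow> rat fps" where
  "G h = Abs_fps (\<lambda>n. of_nat (card (AA h n)))"

lemma G_rec:
  assumes h: "1 \<le> h"
  shows "G h = 1 + fps_X * G (h - 1) * G h"
proof (rule fps_ext)
  fix n
  show "fps_nth (G h) n = fps_nth (1 + fps_X * G (h - 1) * G h) n"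
  proof (cases n)
    case 0 then show ?thesis unfolding G_def using card_AA_0 by simp
  next
    case (Suc k)
    have "fps_nth (1 + fps_X * G (h - 1) * G h) n = fps_nth (G (h - 1) * G h) k"
      using Suc by (simp add: mult.assoc)
    also have "\<dots> = (\<Sum>i=0..k. of_nat (card (AA (h - 1) i)) * of_nat (card (AA h (k - i))))"
      unfolding G_def fps_mult_nth by simp
    also have "\<dots> = of_nat (card (AA h n))" using card_AA_Suc[OF h, of k] Suc by simp
    finally show ?thesis unfolding G_def by simp
  qed
qed

lemma G_inv:
  assumes h: "1 \<le> h"
  shows "G h = 1 / (1 - fps_X * G (h - 1))"
proof -
  define a where "a = 1 - fps_X * G (h - 1)"
  have a0: "fps_nth a 0 \<noteq> 0" unfolding a_def by simp
  have "a * G h = G h - fps_X * G (h - 1) * G h" unfolding a_def by (simp add: algebra_simps)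
  also have "\<dots> = 1" using G_rec[OF h] by (simp add: algebra_simps)
  finally have "a * G h = 1" .
  then have "inverse a = G h" by (rule fps_inverse_unique)
  then show ?thesis using fps_divide_unit[OF a0, of 1] unfolding a_def by simp
qed

lemma G0_eq: "G 0 * (1 - 2 * fps_X) = 1 - fps_X"
proof (rule fps_ext)
  fix n
  have e: "G 0 * (1 - 2 * fps_X) = G 0 - (fps_X * G 0 + fps_X * G 0)" by (simp add: algebra_simps)
  have c: "fps_nth (G 0 * (1 - 2 * fps_X)) n = fps_nth (G 0) n - (if n = 0 then 0 else 2 * fps_nth (G 0) (n - 1))"
    unfolding e fps_sub_nth fps_add_nth fps_X_mult_nth by simp
  have g: "fps_nth (G 0) m = of_nat (card (AA 0 m))" for m unfolding G_def by simp
  show "fps_nth (G 0 * (1 - 2 * fps_X)) n = fps_nth (1 - fps_X) n"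
  proof (cases n)
    case 0 then show ?thesis unfolding c g using card_AA_0 by simp
  next
    case (Suc k)
    show ?thesis
    proof (cases k)
      case 0 then show ?thesis unfolding c g using Suc card_AA_0 card_AA0_pow[of 0] by simp
    next
      case (Suc j)
      then show ?thesis unfolding c g using \<open>n = Suc k\<close> card_AA0_pow[of k] card_AA0_pow[of j] by simp
    qed
  qed
qed

lemma G1_eq: "G 1 = (1 - 2 * fps_X) / (1 - 3 * fps_X + fps_X ^ 2)"
proof -
  define b :: "rat fps" where "b = 1 - 3 * fps_X + fps_X ^ 2"
  have e1: "G 1 = 1 + fps_X * G 0 * G 1" using G_rec[of 1] by simp
  have id: "G 1 * b = (1 - 2 * fps_X) * (G 1 - fps_X * G 0 * G 1) + fps_X * G 1 * (G 0 * (1 - 2 * fps_X) - (1 - fps_X))"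
    unfolding b_def by (simp add: algebra_simps power2_eq_square)
  have "G 1 - fps_X * G 0 * G 1 = 1" using e1 by (simp add: algebra_simps)
  then have Gb: "G 1 * b = 1 - 2 * fps_X" using id G0_eq by simp
  have b0: "fps_nth b 0 \<noteq> 0" unfolding b_def by simp
  have "(1 - 2 * fps_X) / b = (1 - 2 * fps_X) * inverse b" by (rule fps_divide_unit[OF b0])
  also have "\<dots> = G 1 * (b * inverse b)" using Gb by (simp add: mult.assoc)
  also have "\<dots> = G 1" using inverse_mult_eq_1'[OF b0] by simp
  finally show ?thesis unfolding b_def by simp
qed

lemma Sn_eq:
  assumes k: "k \<ge> 2"
  shows "Sn k n = AA (k - 2) n"
proof -
  have "\<And>s. s \<in> perms_of n \<Longrightarrow> (avoids s [1,2,3] \<and> avoids s (tau k)) = (av123 s \<and> okh (k - 2) s)"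
    using avoids123_iff avoids_tau_iff[OF _ _ k] perms_distinct by blast
  then show ?thesis unfolding Sn_def AA_def by auto
qed

lemma gk_G: "k \<ge> 2 \<Longrightarrow> gk k = G (k - 2)"
  unfolding gk_def G_def using Sn_eq by simp

theorem mainTheorem5:
  shows "gk 3 = (1 - 2 * fps_X) / (1 - 3 * fps_X + fps_X ^ 2)
         \<and> (\<forall>k\<ge>4. gk k = 1 / (1 - fps_X * gk (k - 1)))"
proof
  show "gk 3 = (1 - 2 * fps_X) / (1 - 3 * fps_X + fps_X ^ 2)" using gk_G[of 3] G1_eq by simp
  show "\<forall>k\<ge>4. gk k = 1 / (1 - fps_X * gk (k - 1))"
  proof (intro allI impI)
    fix k :: nat assume k: "4 \<le> k"
    have "gk k = G (k - 2)" using gk_G k by simp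
    also have "\<dots> = 1 / (1 - fps_X * G (k - 2 - 1))" using G_inv[of "k - 2"] k by simp
    also have "G (k - 2 - 1) = gk (k - 1)" using gk_G[of "k - 1"] k by (simp add: numeral_eq_Suc)
    finally show "gk k = 1 / (1 - fps_X * gk (k - 1))" .
  qed
qed


end
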